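(* Let $\{X_n,n\geq1\}$ be a $\varphi$-mixing sequence of random variables with common marginal distribution function $F$, whose mixing coefficients satisfy $\varphi(n)=O(n^{-3})$, and assume $P(X_i=X_j)=0$ for all $i\neq j$. Fix $p\in(0,1)$, let $\xi_p=\inf\{x:F(x)\geq p\}$ and $\xi_{p,n}=\inf\{x:F_n(x)\geq p\}$. Assume that $F$ possesses a positive continuous density $f$ in a neighborhood $\mathscr{N}_p$ of $\xi_p$ such that $0<\sup\{f(x):x\in\mathscr{N}_p\}<\infty$, and that $f'$ exists and is bounded on $\mathscr{N}_p$. Then with probability 1, $$\xi_{p,n}=\xi_p-\frac{F_n(\xi_p)-p}{f(\xi_p)}+O\big(n^{-3/4}\log n\big),\quad n\to\infty.$$
   Context: All random variables are defined on a probability space $(\Omega,\mathcal{F},P)$. $F_n(x)=\frac1n\sum_{i=1}^n I(X_i\leq x)$ is the empirical distribution function of $X_1,\dots,X_n$. For $n\leq m$ let $\mathcal{F}_n^m=\sigma(X_i,n\leq i\leq m)$. For sub-$\sigma$-algebras $\mathcal{B},\mathcal{R}$ let $\varphi(\mathcal{B},\mathcal{R})=\sup_{A\in\mathcal{B},B\in\mathcal{R},P(A)>0}|P(B\mid A)-P(B)|$, and the mixing coefficients are $\varphi(n)=\sup_{k\geq1}\varphi(\mathcal{F}_1^k,\mathcal{F}_{k+n}^\infty)$. The sequence is called $\varphi$-mixing if $\varphi(n)\downarrow0$ as $n\to\infty$. *)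

theory Defs
  imports "HOL-Probability.Probability" "HOL-Library.Landau_Symbols"
begin

definition gen_sigma :: "'a measure \<Rightarrow> (nat \<Rightarrow> 'a \<Rightarrow> real) \<Rightarrow> nat set \<Rightarrow> 'a set set" where
  "gen_sigma M X I = sigma_sets (space M) {X i -` B \<inter> space M | i B. i \<in> I \<and> B \<in> sets borel}"

definition phi_sigma :: "'a measure \<Rightarrow> 'a set set \<Rightarrow> 'a set set \<Rightarrow> real" where
  "phi_sigma M \<B> \<R> = (SUP AB \<in> {(A, B). A \<in> \<B> \<and> B \<in> \<R> \<and> measure M A > 0}.
       \<bar>measure M (snd AB \<inter> fst AB) / measure M (fst AB) - measure M (snd AB)\<bar>)"

definition phi_mix :: "'a measure \<Rightarrow> (nat \<Rightarrow> 'a \<Rightarrow> real) \<Rightarrow> nat \<Rightarrow> real" where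
  "phi_mix M X n = (SUP k \<in> {1..}. phi_sigma M (gen_sigma M X {1..k}) (gen_sigma M X {k+n..}))"

definition emp_df :: "(nat \<Rightarrow> 'a \<Rightarrow> real) \<Rightarrow> nat \<Rightarrow> 'a \<Rightarrow> real \<Rightarrow> real" where
  "emp_df X n \<omega> x = (1 / real n) * (\<Sum>i=1..n. if X i \<omega> \<le> x then 1 else 0)"

definition quantile :: "(real \<Rightarrow> real) \<Rightarrow> real \<Rightarrow> real" where
  "quantile G p = Inf {x. G x \<ge> p}"

end

theory Submission
  imports Defs "HOL-Real_Asymp.Real_Asymp"
begin

lemma gen_sigma_gens_Pow: "{X i -` B \<inter> space M | i B. i \<in> I \<and> B \<in> sets borel} \<subseteq> Pow (space M)"
  by auto

lemma gen_sigma_sa: "sigma_algebra (space M) (gen_sigma M X I)"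
  unfolding gen_sigma_def by (rule sigma_algebra_sigma_sets) auto

lemma gen_sigma_sub:
  assumes "\<And>i. X i \<in> borel_measurable M"
  shows "gen_sigma M X I \<subseteq> sets M"
  unfolding gen_sigma_def
  by (rule sets.sigma_sets_subset) (auto intro: measurable_sets assms)

lemma gen_sigma_mono: "I \<subseteq> J \<Longrightarrow> gen_sigma M X I \<subseteq> gen_sigma M X J"
  unfolding gen_sigma_def by (rule sigma_sets_subseteq) blast

lemma gen_sigma_basic: "i \<in> I \<Longrightarrow> B \<in> sets borel \<Longrightarrow> X i -` B \<inter> space M \<in> gen_sigma M X I"
  unfolding gen_sigma_def by (rule sigma_sets.Basic) blast

context prob_space
begin

lemma phi_sigma_bound:
  assumes sub1: "\<B> \<subseteq> sets M" and sub2: "\<R> \<subseteq> sets M" and sp: "space M \<in> \<B>" "space M \<in> \<R>"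
  shows "phi_sigma M \<B> \<R> \<ge> 0" "phi_sigma M \<B> \<R> \<le> 1"
    and "A \<in> \<B> \<Longrightarrow> C \<in> \<R> \<Longrightarrow> prob A > 0 \<Longrightarrow> \<bar>prob (C \<inter> A) / prob A - prob C\<bar> \<le> phi_sigma M \<B> \<R>"
proof -
  let ?S = "{(A, B). A \<in> \<B> \<and> B \<in> \<R> \<and> measure M A > 0}"
  let ?g = "\<lambda>AB. \<bar>measure M (snd AB \<inter> fst AB) / measure M (fst AB) - measure M (snd AB)\<bar>"
  have ne: "?S \<noteq> {}" using sp by (auto intro!: exI[of _ "(space M, space M)"] simp: prob_space)
  have le1: "?g AB \<le> 1" if "AB \<in> ?S" for AB
  proof -
    obtain A C where AB0: "AB = (A, C)" by (cases AB)
    then have AB: "AB = (A, C)" "A \<in> \<B>" "C \<in> \<R>" "prob A > 0" using that by auto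
    have "A \<in> sets M" "C \<in> sets M" using AB sub1 sub2 by auto
    then have "prob (C \<inter> A) \<le> prob A" by (intro finite_measure_mono) auto
    then have a: "prob (C \<inter> A) / prob A \<le> 1" "prob (C \<inter> A) / prob A \<ge> 0" using AB(4) by auto
    have h: "prob C \<le> 1" "prob C \<ge> 0" by auto
    show ?thesis unfolding AB(1) prod.sel abs_le_iff using a h by linarith
  qed
  have bdd: "bdd_above (?g ` ?S)" by (rule bdd_aboveI[where M=1]) (use le1 in blast)
  show "phi_sigma M \<B> \<R> \<le> 1" unfolding phi_sigma_def
    by (rule cSUP_least[OF ne]) (use le1 in auto)
  obtain z where z: "z \<in> ?S" using ne by auto
  have "0 \<le> ?g z" by simp
  also have "?g z \<le> phi_sigma M \<B> \<R>" unfolding phi_sigma_def by (rule cSUP_upper[OF z bdd])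
  finally show "phi_sigma M \<B> \<R> \<ge> 0" .
  show "\<bar>prob (C \<inter> A) / prob A - prob C\<bar> \<le> phi_sigma M \<B> \<R>"
    if "A \<in> \<B>" "C \<in> \<R>" "prob A > 0"
    using cSUP_upper[OF _ bdd, of "(A, C)"] that unfolding phi_sigma_def by auto
qed

lemma gen_sigma_space: "space M \<in> gen_sigma M X I"
  unfolding gen_sigma_def by (rule sigma_sets_top)

lemma phi_mix_bound:
  assumes rv: "\<And>i. X i \<in> borel_measurable M"
  shows "phi_mix M X m \<ge> 0" "phi_mix M X m \<le> 1"
    and "k \<ge> 1 \<Longrightarrow> phi_sigma M (gen_sigma M X {1..k}) (gen_sigma M X {k+m..}) \<le> phi_mix M X m"
proof -
  let ?h = "\<lambda>k. phi_sigma M (gen_sigma M X {1..k}) (gen_sigma M X {k+m..})"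
  note pb = phi_sigma_bound[OF gen_sigma_sub[of X, OF rv] gen_sigma_sub[of X, OF rv] gen_sigma_space gen_sigma_space]
  have bdd: "bdd_above (?h ` {1..})" by (rule bdd_aboveI[where M=1]) (use pb(2) in auto)
  show "phi_mix M X m \<le> 1" unfolding phi_mix_def by (rule cSUP_least) (use pb(2) in auto)
  have "0 \<le> ?h 1" by (rule pb(1))
  also have "\<dots> \<le> phi_mix M X m" unfolding phi_mix_def by (rule cSUP_upper[OF _ bdd]) auto
  finally show "phi_mix M X m \<ge> 0" .
  show "?h k \<le> phi_mix M X m" if "k \<ge> 1"
    unfolding phi_mix_def by (rule cSUP_upper[OF _ bdd]) (use that in auto)
qed

lemma phi_ineq:
  assumes rv: "\<And>i. X i \<in> borel_measurable M"
    and k: "k \<ge> 1" and A: "A \<in> gen_sigma M X {1..k}" and C: "C \<in> gen_sigma M X {k+m..}"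
  shows "prob (A \<inter> C) \<le> prob A * (prob C + phi_mix M X m)"
proof (cases "prob A > 0")
  case True
  note pb = phi_sigma_bound[OF gen_sigma_sub[of X, OF rv] gen_sigma_sub[of X, OF rv] gen_sigma_space gen_sigma_space]
  have "\<bar>prob (C \<inter> A) / prob A - prob C\<bar> \<le> phi_mix M X m"
    using pb(3)[OF A C True] phi_mix_bound(3)[of X, OF rv k, where m=m] by linarith
  then have "prob (C \<inter> A) / prob A \<le> prob C + phi_mix M X m" by linarith
  then show ?thesis using True by (simp add: Int_commute field_simps)
next
  case False
  then have "prob A = 0" using measure_nonneg[of M A] by linarith
  have "A \<in> sets M" "C \<in> sets M" using A C gen_sigma_sub[of X, OF rv] by auto
  then have "prob (A \<inter> C) \<le> prob A" by (intro finite_measure_mono) auto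
  then show ?thesis using \<open>prob A = 0\<close> by simp
qed

end

locale blk = prob_space M for M :: "'a measure" +
  fixes X :: "nat \<Rightarrow> 'a \<Rightarrow> real" and B :: "real set" and q :: real
  assumes rvX: "\<And>i. X i \<in> borel_measurable M" and Bb: "B \<in> sets borel"
    and qA: "\<And>i. i \<ge> 1 \<Longrightarrow> prob (X i -` B \<inter> space M) = q"
begin

definition "A i = X i -` B \<inter> space M"
definition "Y i \<omega> = indicator (A i) \<omega> - q"
definition "pat I \<omega> = {i\<in>I. \<omega> \<in> A i}"
definition "atom I J = {\<omega>\<in>space M. pat I \<omega> = J}"

lemma A_sets[measurable]: "A i \<in> sets M"
  unfolding A_def using measurable_sets[OF rvX Bb] .

lemma A_gen: "i \<in> I \<Longrightarrow> A i \<in> gen_sigma M X I"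
  unfolding A_def by (rule gen_sigma_basic[OF _ Bb])

lemma q_bounds: "0 \<le> q" "q \<le> 1"
  using qA[of 1] by auto

lemma Y_bound: "\<bar>Y i \<omega>\<bar> \<le> 1"
  using q_bounds by (auto simp: Y_def indicator_def)

lemma Y_meas[measurable]: "Y i \<in> borel_measurable M"
  unfolding Y_def by measurable

lemma atom_gen:
  assumes fin: "finite I"
  shows "atom I J \<in> gen_sigma M X I"
proof -
  interpret sa: sigma_algebra "space M" "gen_sigma M X I" by (rule gen_sigma_sa)
  show ?thesis
  proof (cases "J \<subseteq> I")
    case False
    then have "atom I J = {}" by (auto simp: atom_def pat_def)
    then show ?thesis by simp
  next
    case True
    have eq: "atom I J = space M \<inter> (\<Inter>i\<in>I. if i \<in> J then A i else space M - A i)"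
      using True by (auto simp: atom_def pat_def split: if_splits)
    show ?thesis
    proof (cases "I = {}")
      case True
      then show ?thesis using eq by (simp add: gen_sigma_space)
    next
      case False
      have "(\<Inter>i\<in>I. if i \<in> J then A i else space M - A i) \<in> gen_sigma M X I"
        by (rule sa.finite_INT[OF fin False]) (auto intro: A_gen)
      then show ?thesis unfolding eq by auto
    qed
  qed
qed

lemma atom_sets[measurable]: "finite I \<Longrightarrow> atom I J \<in> sets M"
  using atom_gen gen_sigma_sub[of X, OF rvX] by blast

lemma atom_sub: "atom I J \<subseteq> space M"
  by (auto simp: atom_def)

lemma int_ind: "S \<in> sets M \<Longrightarrow> integrable M (\<lambda>\<omega>. c * indicator S \<omega> :: real)"
  by (intro integrable_mult_right integrable_real_indicator) (auto simp: less_top[symmetric])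

lemma int_atom[simp]: "finite I \<Longrightarrow> integrable M (indicat_real (atom I J))"
  by (intro integrable_real_indicator) (auto simp: less_top[symmetric] atom_sets)

lemma int_atom2[simp]: "finite I \<Longrightarrow> finite I' \<Longrightarrow> integrable M (indicat_real (atom I J \<inter> atom I' K))"
  by (intro integrable_real_indicator) (auto simp: less_top[symmetric] atom_sets)

lemma atom_disj: "disjoint_family_on (atom I) S"
  by (auto simp: disjoint_family_on_def atom_def)

lemma pat_rep:
  fixes g :: "nat set \<Rightarrow> real"
  assumes "finite I" "\<omega> \<in> space M"
  shows "g (pat I \<omega>) = (\<Sum>J\<in>Pow I. g J * indicator (atom I J) \<omega>)"
proof -
  have "pat I \<omega> \<in> Pow I" by (auto simp: pat_def)
  have "(\<Sum>J\<in>Pow I. g J * indicator (atom I J) \<omega>) = (\<Sum>J\<in>{pat I \<omega>}. g J * indicator (atom I J) \<omega>)"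
  proof (rule sum.mono_neutral_right)
    show "finite (Pow I)" using assms by simp
    show "{pat I \<omega>} \<subseteq> Pow I" using \<open>pat I \<omega> \<in> Pow I\<close> by simp
    show "\<forall>J\<in>Pow I - {pat I \<omega>}. g J * indicator (atom I J) \<omega> = 0"
    proof
      fix J assume "J \<in> Pow I - {pat I \<omega>}"
      then have "pat I \<omega> \<noteq> J" by blast
      then have "\<omega> \<notin> atom I J" by (simp add: atom_def)
      then show "g J * indicator (atom I J) \<omega> = 0" by simp
    qed
  qed
  also have "\<dots> = g (pat I \<omega>)" using assms by (simp add: atom_def)
  finally show ?thesis by simp
qed

lemma integral_pat:
  fixes g :: "nat set \<Rightarrow> real"
  assumes "finite I"
  shows "(\<integral>\<omega>. g (pat I \<omega>) \<partial>M) = (\<Sum>J\<in>Pow I. g J * prob (atom I J))"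
proof -
  have "(\<integral>\<omega>. g (pat I \<omega>) \<partial>M) = (\<integral>\<omega>. (\<Sum>J\<in>Pow I. g J * indicator (atom I J) \<omega>) \<partial>M)"
    by (rule Bochner_Integration.integral_cong[OF refl], rule pat_rep[OF assms])
  also have "\<dots> = (\<Sum>J\<in>Pow I. (\<integral>\<omega>. g J * indicator (atom I J) \<omega> \<partial>M))"
    by (rule Bochner_Integration.integral_sum) (simp add: assms)
  also have "\<dots> = (\<Sum>J\<in>Pow I. g J * prob (atom I J))"
    using assms by (simp add: Int_absorb2[OF atom_sub])
  finally show ?thesis .
qed

lemma integral_pat2:
  fixes g h :: "nat set \<Rightarrow> real"
  assumes "finite I" "finite I'"
  shows "(\<integral>\<omega>. g (pat I \<omega>) * h (pat I' \<omega>) \<partial>M)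
     = (\<Sum>J\<in>Pow I. \<Sum>K\<in>Pow I'. g J * h K * prob (atom I J \<inter> atom I' K))"
proof -
  have "(\<integral>\<omega>. g (pat I \<omega>) * h (pat I' \<omega>) \<partial>M)
     = (\<integral>\<omega>. (\<Sum>J\<in>Pow I. \<Sum>K\<in>Pow I'. g J * h K * indicator (atom I J \<inter> atom I' K) \<omega>) \<partial>M)"
  proof (rule Bochner_Integration.integral_cong)
    fix \<omega> assume w: "\<omega> \<in> space M"
    have "g (pat I \<omega>) * h (pat I' \<omega>)
       = (\<Sum>J\<in>Pow I. g J * indicator (atom I J) \<omega>) * (\<Sum>K\<in>Pow I'. h K * indicator (atom I' K) \<omega>)"
      using pat_rep[OF assms(1) w, where g=g] pat_rep[OF assms(2) w, where g=h] by simp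
    also have "\<dots> = (\<Sum>J\<in>Pow I. \<Sum>K\<in>Pow I'. g J * h K * indicator (atom I J \<inter> atom I' K) \<omega>)"
      by (simp add: sum_distrib_left sum_distrib_right indicator_inter_arith mult_ac) (rule sum.swap)
    finally show "g (pat I \<omega>) * h (pat I' \<omega>) = \<dots>" .
  qed simp
  also have "\<dots> = (\<Sum>J\<in>Pow I. (\<integral>\<omega>. (\<Sum>K\<in>Pow I'. g J * h K * indicator (atom I J \<inter> atom I' K) \<omega>) \<partial>M))"
    by (rule Bochner_Integration.integral_sum) (intro Bochner_Integration.integrable_sum integrable_mult_right int_atom2 assms)
  also have "\<dots> = (\<Sum>J\<in>Pow I. \<Sum>K\<in>Pow I'. (\<integral>\<omega>. g J * h K * indicator (atom I J \<inter> atom I' K) \<omega> \<partial>M))"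
    by (intro sum.cong refl Bochner_Integration.integral_sum) (simp add: assms)
  also have "\<dots> = (\<Sum>J\<in>Pow I. \<Sum>K\<in>Pow I'. g J * h K * prob (atom I J \<inter> atom I' K))"
    using assms by (simp add: Int_absorb2 atom_sub le_infI1)
  finally show ?thesis .
qed

end

context blk
begin

lemma mix_one:
  assumes k: "k \<ge> 1" and E: "E \<in> gen_sigma M X {1..k}" and fin: "finite \<K>"
    and F: "\<And>K. K \<in> \<K> \<Longrightarrow> F K \<in> gen_sigma M X {k+m..}" and disj: "disjoint_family_on F \<K>"
    and d: "\<And>K. K \<in> \<K> \<Longrightarrow> 0 \<le> d K \<and> d K \<le> Z" and Z: "Z \<ge> 0"
  shows "(\<Sum>K\<in>\<K>. d K * prob (E \<inter> F K)) \<le> prob E * ((\<Sum>K\<in>\<K>. d K * prob (F K)) + phi_mix M X m * Z)"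
proof -
  define \<delta> where "\<delta> K = prob (E \<inter> F K) - prob E * prob (F K)" for K
  define Pos where "Pos = {K\<in>\<K>. 0 < \<delta> K}"
  define U where "U = (\<Union>K\<in>Pos. F K)"
  have Pfin: "finite Pos" using fin by (simp add: Pos_def)
  have PK: "Pos \<subseteq> \<K>" by (auto simp: Pos_def)
  have Fs: "F K \<in> sets M" if "K \<in> \<K>" for K using F[OF that] gen_sigma_sub[of X, OF rvX] by blast
  have Es: "E \<in> sets M" using E gen_sigma_sub[of X, OF rvX] by blast
  interpret sa: sigma_algebra "space M" "gen_sigma M X {k+m..}" by (rule gen_sigma_sa)
  have U: "U \<in> gen_sigma M X {k+m..}" unfolding U_def using Pfin PK F by blast
  have disjP: "disjoint_family_on F Pos" using PK disj by (rule disjoint_family_on_mono)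
  have disjEP: "disjoint_family_on (\<lambda>K. E \<inter> F K) Pos" using disjP
    by (auto simp: disjoint_family_on_def)
  have pU: "prob U = (\<Sum>K\<in>Pos. prob (F K))"
    unfolding U_def by (rule finite_measure_finite_Union[OF Pfin _ disjP]) (use Fs PK in auto)
  have "E \<inter> U = (\<Union>K\<in>Pos. E \<inter> F K)" by (auto simp: U_def)
  then have pEU: "prob (E \<inter> U) = (\<Sum>K\<in>Pos. prob (E \<inter> F K))"
  proof -
    have "(\<lambda>K. E \<inter> F K) ` Pos \<subseteq> sets M" using Fs PK Es by auto
    from finite_measure_finite_Union[OF Pfin this disjEP] \<open>E \<inter> U = _\<close> show ?thesis by simp
  qed
  have "(\<Sum>K\<in>\<K>. d K * \<delta> K) \<le> (\<Sum>K\<in>\<K>. if K \<in> Pos then Z * \<delta> K else 0)"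
  proof (rule sum_mono)
    fix K assume K: "K \<in> \<K>"
    show "d K * \<delta> K \<le> (if K \<in> Pos then Z * \<delta> K else 0)"
    proof (cases "K \<in> Pos")
      case True
      then have "\<delta> K > 0" by (simp add: Pos_def)
      then show ?thesis using True d[OF K] by (simp add: mult_right_mono)
    next
      case False
      then have "\<delta> K \<le> 0" using K by (simp add: Pos_def)
      then show ?thesis using False d[OF K] by (simp add: mult_nonneg_nonpos)
    qed
  qed
  also have "\<dots> = (\<Sum>K\<in>Pos. Z * \<delta> K)"
    unfolding Pos_def using fin by (simp add: sum.inter_filter)
  also have "\<dots> = Z * (prob (E \<inter> U) - prob E * prob U)"
    by (simp add: pEU pU \<delta>_def sum_distrib_left sum_subtractf right_diff_distrib)
  also have "\<dots> \<le> Z * (prob E * phi_mix M X m)"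
  proof (rule mult_left_mono[OF _ Z])
    have "prob (E \<inter> U) \<le> prob E * (prob U + phi_mix M X m)"
      by (rule phi_ineq[OF rvX k E U])
    then show "prob (E \<inter> U) - prob E * prob U \<le> prob E * phi_mix M X m"
      by (simp add: algebra_simps)
  qed
  finally have *: "(\<Sum>K\<in>\<K>. d K * \<delta> K) \<le> Z * (prob E * phi_mix M X m)" .
  have "(\<Sum>K\<in>\<K>. d K * prob (E \<inter> F K)) = prob E * (\<Sum>K\<in>\<K>. d K * prob (F K)) + (\<Sum>K\<in>\<K>. d K * \<delta> K)"
    by (simp add: \<delta>_def algebra_simps sum.distrib sum_distrib_left sum_subtractf)
  also have "\<dots> \<le> prob E * (\<Sum>K\<in>\<K>. d K * prob (F K)) + Z * (prob E * phi_mix M X m)"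
    using * by simp
  finally show ?thesis by (simp add: algebra_simps)
qed

lemma mix_fin:
  assumes k: "k \<ge> 1" and finJ: "finite \<J>" and E: "\<And>J. J \<in> \<J> \<Longrightarrow> E J \<in> gen_sigma M X {1..k}"
    and fin: "finite \<K>"
    and F: "\<And>K. K \<in> \<K> \<Longrightarrow> F K \<in> gen_sigma M X {k+m..}" and disj: "disjoint_family_on F \<K>"
    and c: "\<And>J. J \<in> \<J> \<Longrightarrow> 0 \<le> c J"
    and d: "\<And>K. K \<in> \<K> \<Longrightarrow> 0 \<le> d K \<and> d K \<le> Z" and Z: "Z \<ge> 0"
  shows "(\<Sum>J\<in>\<J>. \<Sum>K\<in>\<K>. c J * d K * prob (E J \<inter> F K))
     \<le> (\<Sum>J\<in>\<J>. c J * prob (E J)) * ((\<Sum>K\<in>\<K>. d K * prob (F K)) + phi_mix M X m * Z)"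
proof -
  have "(\<Sum>J\<in>\<J>. \<Sum>K\<in>\<K>. c J * d K * prob (E J \<inter> F K)) = (\<Sum>J\<in>\<J>. c J * (\<Sum>K\<in>\<K>. d K * prob (E J \<inter> F K)))"
    by (simp add: sum_distrib_left mult_ac)
  also have "\<dots> \<le> (\<Sum>J\<in>\<J>. c J * (prob (E J) * ((\<Sum>K\<in>\<K>. d K * prob (F K)) + phi_mix M X m * Z)))"
    by (intro sum_mono mult_left_mono mix_one[OF k E fin F disj d Z] c) auto
  also have "\<dots> = (\<Sum>J\<in>\<J>. c J * prob (E J)) * ((\<Sum>K\<in>\<K>. d K * prob (F K)) + phi_mix M X m * Z)"
    by (simp add: sum_distrib_right mult_ac)
  finally show ?thesis .
qed

definition "S I \<omega> = (\<Sum>i\<in>I. Y i \<omega>)"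
definition "ex u I \<omega> = exp (u * S I \<omega>)"

lemma S_pat: "finite I \<Longrightarrow> \<omega> \<in> space M \<Longrightarrow> S I \<omega> = real (card (pat I \<omega>)) - real (card I) * q"
proof -
  assume fin: "finite I" and w: "\<omega> \<in> space M"
  have "S I \<omega> = (\<Sum>i\<in>I. indicator (A i) \<omega>) - (\<Sum>i\<in>I. q)"
    by (simp add: S_def Y_def sum_subtractf)
  also have "(\<Sum>i\<in>I. indicator (A i) \<omega> :: real) = (\<Sum>i\<in>pat I \<omega>. 1)"
    unfolding pat_def using fin by (simp add: sum.inter_filter[symmetric] indicator_def Int_def)
  finally show ?thesis by simp
qed

lemma S_meas[measurable]: "S I \<in> borel_measurable M"
  unfolding S_def by measurable

lemma ex_meas[measurable]: "ex u I \<in> borel_measurable M"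
  unfolding ex_def by measurable

lemma S_bound: "\<bar>S I \<omega>\<bar> \<le> real (card I)"
proof -
  have "\<bar>S I \<omega>\<bar> \<le> (\<Sum>i\<in>I. \<bar>Y i \<omega>\<bar>)" unfolding S_def by (rule sum_abs)
  also have "\<dots> \<le> (\<Sum>i\<in>I. 1)" by (intro sum_mono Y_bound)
  finally show ?thesis by simp
qed

lemma ex_pos: "ex u I \<omega> > 0" by (simp add: ex_def)

lemma ex_bound: "ex u I \<omega> \<le> exp (\<bar>u\<bar> * card I)"
proof -
  have "u * S I \<omega> \<le> \<bar>u\<bar> * card I"
    using S_bound[of I \<omega>] abs_mult[of u "S I \<omega>"] abs_ge_self[of "u * S I \<omega>"]
      mult_left_mono[of "\<bar>S I \<omega>\<bar>" "card I" "\<bar>u\<bar>"] by linarith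
  then show ?thesis by (simp add: ex_def)
qed

lemma ex_int: "integrable M (ex u I)"
  by (rule integrable_const_bound[where B="exp (\<bar>u\<bar> * card I)"])
     (use ex_bound ex_pos in \<open>auto intro!: AE_I2 simp: less_imp_le\<close>)

lemma ex_mix:
  assumes k: "k \<ge> 1" and m: "m \<ge> 1" and fI: "finite I" and fI': "finite I'"
    and I: "I \<subseteq> {1..k}" and I': "I' \<subseteq> {k+m..}"
  shows "(\<integral>\<omega>. ex u (I \<union> I') \<omega> \<partial>M)
     \<le> (\<integral>\<omega>. ex u I \<omega> \<partial>M) * ((\<integral>\<omega>. ex u I' \<omega> \<partial>M) + phi_mix M X m * exp (\<bar>u\<bar> * card I'))"
proof -
  define G where "G L J = exp (u * (real (card J) - real (card L) * q))" for L J :: "nat set"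
  have disj: "I \<inter> I' = {}" using I I' m by fastforce
  have exG: "ex u L \<omega> = G L (pat L \<omega>)" if "finite L" "\<omega> \<in> space M" for L \<omega>
    using S_pat[OF that] by (simp add: ex_def G_def)
  have "(\<integral>\<omega>. ex u (I \<union> I') \<omega> \<partial>M) = (\<integral>\<omega>. G I (pat I \<omega>) * G I' (pat I' \<omega>) \<partial>M)"
  proof (rule Bochner_Integration.integral_cong[OF refl])
    fix \<omega> assume w: "\<omega> \<in> space M"
    have "S (I \<union> I') \<omega> = S I \<omega> + S I' \<omega>" unfolding S_def using fI fI' disj by (simp add: sum.union_disjoint)
    then have "ex u (I \<union> I') \<omega> = ex u I \<omega> * ex u I' \<omega>" by (simp add: ex_def distrib_left exp_add)
    then show "ex u (I \<union> I') \<omega> = G I (pat I \<omega>) * G I' (pat I' \<omega>)" using exG fI fI' w by simp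
  qed
  also have "\<dots> = (\<Sum>J\<in>Pow I. \<Sum>K\<in>Pow I'. G I J * G I' K * prob (atom I J \<inter> atom I' K))"
    by (rule integral_pat2[OF fI fI'])
  also have "\<dots> \<le> (\<Sum>J\<in>Pow I. G I J * prob (atom I J)) * ((\<Sum>K\<in>Pow I'. G I' K * prob (atom I' K)) + phi_mix M X m * exp (\<bar>u\<bar> * card I'))"
  proof (rule mix_fin[OF k])
    show "finite (Pow I)" "finite (Pow I')" using fI fI' by auto
    show "atom I J \<in> gen_sigma M X {1..k}" for J using atom_gen[OF fI] gen_sigma_mono[OF I] by blast
    show "atom I' K \<in> gen_sigma M X {k+m..}" for K using atom_gen[OF fI'] gen_sigma_mono[OF I'] by blast
    show "disjoint_family_on (atom I') (Pow I')" by (rule atom_disj)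
    show "0 \<le> G I J" for J by (simp add: G_def)
    show "0 \<le> exp (\<bar>u\<bar> * card I')" by simp
    show "0 \<le> G I' K \<and> G I' K \<le> exp (\<bar>u\<bar> * real (card I'))" if "K \<in> Pow I'" for K
    proof -
      have "card K \<le> card I'" using that fI' by (auto intro: card_mono)
      then have "real (card K) \<le> real (card I')" by simp
      moreover have "0 \<le> real (card I') * q" "real (card I') * q \<le> real (card I')"
        using q_bounds mult_left_mono[of q 1 "real (card I')"] by auto
      ultimately have "\<bar>real (card K) - real (card I') * q\<bar> \<le> real (card I')"
        unfolding abs_le_iff by linarith
      then have "u * (real (card K) - real (card I') * q) \<le> \<bar>u\<bar> * real (card I')"
        using abs_mult[of u] abs_ge_self mult_left_mono[of _ _ "\<bar>u\<bar>"]
        by (metis abs_ge_zero order_trans)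
      then show ?thesis by (simp add: G_def)
    qed
  qed
  also have "(\<Sum>J\<in>Pow I. G I J * prob (atom I J)) = (\<integral>\<omega>. ex u I \<omega> \<partial>M)"
    by (subst integral_pat[OF fI, symmetric]) (rule Bochner_Integration.integral_cong, auto simp: exG fI)
  also have "(\<Sum>K\<in>Pow I'. G I' K * prob (atom I' K)) = (\<integral>\<omega>. ex u I' \<omega> \<partial>M)"
    by (subst integral_pat[OF fI', symmetric]) (rule Bochner_Integration.integral_cong, auto simp: exG fI')
  finally show ?thesis .
qed

end

lemma exp_quad:
  fixes x :: real assumes "\<bar>x\<bar> \<le> 1" shows "exp x \<le> 1 + x + x\<^sup>2"
proof (cases "x \<ge> 0")
  case True then show ?thesis using exp_bound[of x] assms by auto
next
  case False
  define y where "y = - x"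
  have y: "0 \<le> y" "y \<le> 1" using False assms by (auto simp: y_def)
  have e: "1 + y + y\<^sup>2 / 2 \<le> exp y" by (rule exp_lower_Taylor_quadratic[OF y(1)])
  have pos: "0 < 1 + y + y\<^sup>2 / 2" using y by (simp add: add_pos_nonneg)
  have "(1 - y + y\<^sup>2) * (2 + 2 * y + y\<^sup>2) = 2 + y\<^sup>2 + y^3 + y^4"
    by (simp add: algebra_simps power2_eq_square power3_eq_cube power4_eq_xxxx)
  also have "\<dots> \<ge> 2" using y by simp
  finally have "1 \<le> (1 - y + y\<^sup>2) * (1 + y + y\<^sup>2 / 2)" by (simp add: field_simps)
  then have "1 / (1 + y + y\<^sup>2 / 2) \<le> 1 - y + y\<^sup>2" using pos by (simp add: divide_le_eq)
  moreover have "exp x = 1 / exp y" by (simp add: y_def exp_minus field_simps)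
  moreover have "1 / exp y \<le> 1 / (1 + y + y\<^sup>2 / 2)" using e pos by (intro divide_left_mono) auto
  ultimately show ?thesis by (simp add: y_def)
qed

context blk
begin

lemma Y_int[simp]: "integrable M (Y i)"
  by (rule integrable_const_bound[where B=1]) (auto simp: Y_bound intro!: AE_I2)

lemma YY_int[simp]: "integrable M (\<lambda>\<omega>. Y i \<omega> * Y j \<omega>)"
  by (rule integrable_const_bound[where B=1])
     (auto simp: abs_mult intro!: AE_I2 mult_le_one Y_bound)

lemma A_sub: "A i \<subseteq> space M" by (auto simp: A_def)

lemma int_A[simp]: "integrable M (indicat_real (A i))" "integrable M (indicat_real (A i \<inter> A j))"
  by (auto intro!: integrable_real_indicator simp: less_top[symmetric])

lemma pA: "i \<ge> 1 \<Longrightarrow> prob (A i) = q"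
  unfolding A_def by (rule qA)

lemma EY: "i \<ge> 1 \<Longrightarrow> (\<integral>\<omega>. Y i \<omega> \<partial>M) = 0"
  unfolding Y_def using pA by (simp add: prob_space Int_absorb2 A_sub)

lemma EYY: assumes "i \<ge> 1" "j \<ge> 1"
  shows "(\<integral>\<omega>. Y i \<omega> * Y j \<omega> \<partial>M) = prob (A i \<inter> A j) - q\<^sup>2"
proof -
  have "(\<integral>\<omega>. Y i \<omega> * Y j \<omega> \<partial>M) = (\<integral>\<omega>. indicator (A i \<inter> A j) \<omega> - q * indicator (A i) \<omega> - q * indicator (A j) \<omega> + q\<^sup>2 \<partial>M)"
    by (rule Bochner_Integration.integral_cong)
       (auto simp: Y_def indicator_def power2_eq_square algebra_simps)
  also have "\<dots> = prob (A i \<inter> A j) - q * prob (A i) - q * prob (A j) + q\<^sup>2"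
    by (simp add: prob_space Int_absorb2 A_sub le_infI1)
  finally show ?thesis using pA assms by (simp add: power2_eq_square)
qed

lemma cov_bound: assumes "1 \<le> i" "i < j"
  shows "(\<integral>\<omega>. Y i \<omega> * Y j \<omega> \<partial>M) \<le> q * phi_mix M X (j - i)"
proof -
  have "prob (A i \<inter> A j) \<le> prob (A i) * (prob (A j) + phi_mix M X (j - i))"
    by (rule phi_ineq[OF rvX assms(1)]) (use assms in \<open>auto intro!: A_gen\<close>)
  then show ?thesis using EYY[of i j] pA assms by (simp add: power2_eq_square algebra_simps)
qed

lemma var_diag: "1 \<le> i \<Longrightarrow> (\<integral>\<omega>. Y i \<omega> * Y i \<omega> \<partial>M) \<le> q"
  using EYY[of i i] pA[of i] q_bounds by simp

lemma sum_phi_shift: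
  assumes Phi: "\<And>D. (\<Sum>d=1..D. phi_mix M X d) \<le> \<Phi>" and fin: "finite J" and J: "\<And>j. j \<in> J \<Longrightarrow> j > 0 \<and> j \<le> N"
  shows "(\<Sum>j\<in>J. phi_mix M X j) \<le> \<Phi>"
proof -
  have "(\<Sum>j\<in>J. phi_mix M X j) \<le> (\<Sum>d=1..N. phi_mix M X d)"
    by (rule sum_mono2) (use J phi_mix_bound(1)[of X, OF rvX] in \<open>auto simp: Suc_le_eq\<close>)
  also have "\<dots> \<le> \<Phi>" by (rule Phi)
  finally show ?thesis .
qed

lemma var_bound:
  assumes Phi: "\<And>D. (\<Sum>d=1..D. phi_mix M X d) \<le> \<Phi>" and fin: "finite I" and I: "I \<subseteq> {1..}"
  shows "(\<integral>\<omega>. (S I \<omega>)\<^sup>2 \<partial>M) \<le> real (card I) * q * (1 + 2 * \<Phi>)"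
proof -
  have "(\<integral>\<omega>. (S I \<omega>)\<^sup>2 \<partial>M) = (\<integral>\<omega>. (\<Sum>i\<in>I. \<Sum>j\<in>I. Y i \<omega> * Y j \<omega>) \<partial>M)"
    by (simp add: S_def power2_eq_square sum_product)
  also have "\<dots> = (\<Sum>i\<in>I. \<Sum>j\<in>I. (\<integral>\<omega>. Y i \<omega> * Y j \<omega> \<partial>M))"
    by (simp add: Bochner_Integration.integral_sum Bochner_Integration.integrable_sum)
  also have "\<dots> \<le> (\<Sum>i\<in>I. q * (1 + 2 * \<Phi>))"
  proof (rule sum_mono)
    fix i assume i: "i \<in> I"
    have i1: "i \<ge> 1" using i I by auto
    let ?c = "\<lambda>j. (\<integral>\<omega>. Y i \<omega> * Y j \<omega> \<partial>M)"
    define Gt where "Gt = {j\<in>I. i < j}"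
    define Lt where "Lt = {j\<in>I. j < i}"
    have split: "I = {i} \<union> Gt \<union> Lt" using i by (auto simp: Gt_def Lt_def)
    have "(\<Sum>j\<in>I. ?c j) = ?c i + (\<Sum>j\<in>Gt. ?c j) + (\<Sum>j\<in>Lt. ?c j)"
      using fin by (subst split, subst sum.union_disjoint, auto simp: Gt_def Lt_def sum.union_disjoint)
    also have "(\<Sum>j\<in>Gt. ?c j) \<le> q * \<Phi>"
    proof -
      have "(\<Sum>j\<in>Gt. ?c j) \<le> (\<Sum>j\<in>Gt. q * phi_mix M X (j - i))"
        by (rule sum_mono, rule cov_bound[OF i1]) (auto simp: Gt_def)
      also have "\<dots> = q * (\<Sum>d\<in>(\<lambda>j. j - i) ` Gt. phi_mix M X d)"
        by (subst sum.reindex) (auto simp: inj_on_def Gt_def sum_distrib_left)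
      also have "\<dots> \<le> q * \<Phi>"
      proof (intro mult_left_mono q_bounds sum_phi_shift[OF Phi, where N="Max I"])
        fix d assume "d \<in> (\<lambda>j. j - i) ` Gt"
        then obtain j where j: "j \<in> I" "i < j" "d = j - i" by (auto simp: Gt_def)
        have "j \<le> Max I" using Max_ge[OF fin j(1)] .
        then show "0 < d \<and> d \<le> Max I" using j by auto
      qed (simp add: fin Gt_def)
      finally show ?thesis .
    qed
    also have "(\<Sum>j\<in>Lt. ?c j) \<le> q * \<Phi>"
    proof -
      have "(\<Sum>j\<in>Lt. ?c j) \<le> (\<Sum>j\<in>Lt. q * phi_mix M X (i - j))"
      proof (rule sum_mono)
        fix j assume j: "j \<in> Lt"
        then have "j \<ge> 1" "j < i" using I by (auto simp: Lt_def)
        then show "?c j \<le> q * phi_mix M X (i - j)" using cov_bound[of j i] by (simp add: mult.commute)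
      qed
      also have "\<dots> = q * (\<Sum>d\<in>(\<lambda>j. i - j) ` Lt. phi_mix M X d)"
        by (subst sum.reindex) (auto simp: inj_on_def Lt_def sum_distrib_left)
      also have "\<dots> \<le> q * \<Phi>"
        by (intro mult_left_mono q_bounds sum_phi_shift[OF Phi, where N="i"])
           (use fin in \<open>auto simp: Lt_def\<close>)
      finally show ?thesis .
    qed
    finally show "(\<Sum>j\<in>I. ?c j) \<le> q * (1 + 2 * \<Phi>)" using var_diag[OF i1] by (simp add: algebra_simps)
  qed
  also have "\<dots> = real (card I) * q * (1 + 2 * \<Phi>)" by simp
  finally show ?thesis .
qed

lemma ES: "finite I \<Longrightarrow> I \<subseteq> {1..} \<Longrightarrow> (\<integral>\<omega>. S I \<omega> \<partial>M) = 0"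
  unfolding S_def by (subst Bochner_Integration.integral_sum) (auto intro!: sum.neutral EY)

lemma S_int[simp]: "integrable M (S I)"
  unfolding S_def by (simp add: Bochner_Integration.integrable_sum)

lemma S2_int[simp]: "integrable M (\<lambda>\<omega>. (S I \<omega>)\<^sup>2)"
  by (rule integrable_const_bound[where B="real (card I)^2"])
     (auto simp: abs_le_square_iff[symmetric] S_bound intro!: AE_I2 power_mono)

lemma mgf_block:
  fixes u :: real
  assumes Phi: "\<And>D. (\<Sum>d=1..D. phi_mix M X d) \<le> \<Phi>" and fin: "finite I" and I: "I \<subseteq> {1..}"
    and u: "\<bar>u\<bar> * card I \<le> 1"
  shows "(\<integral>\<omega>. ex u I \<omega> \<partial>M) \<le> 1 + u\<^sup>2 * (real (card I) * q * (1 + 2 * \<Phi>))"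
proof -
  have "(\<integral>\<omega>. ex u I \<omega> \<partial>M) \<le> (\<integral>\<omega>. 1 + u * S I \<omega> + u\<^sup>2 * (S I \<omega>)\<^sup>2 \<partial>M)"
  proof (rule integral_mono)
    show "integrable M (ex u I)" by (rule ex_int)
    show "integrable M (\<lambda>\<omega>. 1 + u * S I \<omega> + u\<^sup>2 * (S I \<omega>)\<^sup>2)" by simp
    fix \<omega>
    have "\<bar>u * S I \<omega>\<bar> \<le> 1"
      using S_bound[of I \<omega>] u by (simp add: abs_mult) (meson abs_ge_zero mult_left_mono order_trans)
    from exp_quad[OF this] show "ex u I \<omega> \<le> 1 + u * S I \<omega> + u\<^sup>2 * (S I \<omega>)\<^sup>2"
      by (simp add: ex_def power_mult_distrib)
  qed
  also have "\<dots> = 1 + u\<^sup>2 * (\<integral>\<omega>. (S I \<omega>)\<^sup>2 \<partial>M)"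
    using ES[OF fin I] by (simp add: prob_space)
  also have "\<dots> \<le> 1 + u\<^sup>2 * (real (card I) * q * (1 + 2 * \<Phi>))"
    by (intro add_left_mono mult_left_mono var_bound[OF Phi fin I]) auto
  finally show ?thesis .
qed

end

context blk
begin

definition Blk :: "nat \<Rightarrow> nat \<Rightarrow> nat \<Rightarrow> nat set" where "Blk n L b = {i\<in>{1..n}. (i - 1) div L = b}"
definition Ipar :: "nat \<Rightarrow> nat \<Rightarrow> nat \<Rightarrow> nat \<Rightarrow> nat set" where
  "Ipar n L p r = {i\<in>{1..n}. (i - 1) div L < r \<and> ((i - 1) div L) mod 2 = p}"

lemma Blk_fin[simp]: "finite (Blk n L b)" by (simp add: Blk_def)
lemma Ipar_fin[simp]: "finite (Ipar n L p r)" by (simp add: Ipar_def)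

lemma Ipar_Suc: "Ipar n L p (Suc r) = (if r mod 2 = p then Ipar n L p r \<union> Blk n L r else Ipar n L p r)"
  by (auto simp: Ipar_def Blk_def less_Suc_eq)

lemma Ipar_0: "Ipar n L p 0 = {}" by (simp add: Ipar_def)

lemma Ipar_sub:
  assumes L: "L \<ge> 1" and r: "r mod 2 = p"
  shows "Ipar n L p r \<subseteq> {1..max 1 ((r - 1) * L)}"
proof
  fix i assume i: "i \<in> Ipar n L p r"
  define b where "b = (i - 1) div L"
  have b: "b < r" "b mod 2 = r mod 2" and i1: "i \<ge> 1" using i r by (auto simp: Ipar_def b_def)
  have "b \<noteq> r - 1"
  proof
    assume "b = r - 1"
    then have "r = Suc b" using b by simp
    then show False using b(2) by presburger
  qed
  then have "b < r - 1" using b by simp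
  then have "i - 1 < (r - 1) * L" unfolding b_def using L by (simp add: div_less_iff_less_mult)
  then show "i \<in> {1..max 1 ((r - 1) * L)}" using i1 by auto
qed

lemma Blk_sub:
  assumes L: "L \<ge> 1"
  shows "Blk n L r \<subseteq> {r * L + 1 .. r * L + L}"
proof
  fix i assume i: "i \<in> Blk n L r"
  then have d: "(i - 1) div L = r" and i1: "i \<ge> 1" by (auto simp: Blk_def)
  have L0: "L > 0" using L by simp
  have "r * L \<le> i - 1" using d less_eq_div_iff_mult_less_eq[OF L0, of r "i - 1"] by simp
  moreover have "i - 1 < (r + 1) * L" using d div_less_iff_less_mult[OF L0, of "i - 1" "r + 1"] by simp
  ultimately show "i \<in> {r * L + 1 .. r * L + L}" using i1 by auto
qed

lemma Blk_card: "L \<ge> 1 \<Longrightarrow> card (Blk n L r) \<le> L"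
  using card_mono[OF _ Blk_sub[of L n r]] by simp

lemma Blk_pos: "Blk n L b \<subseteq> {1..}" by (auto simp: Blk_def)
lemma Ipar_pos: "Ipar n L p r \<subseteq> {1..}" by (auto simp: Ipar_def)

lemma ex_empty: "(\<integral>\<omega>. ex u {} \<omega> \<partial>M) = 1"
  by (simp add: ex_def S_def prob_space)

lemma Eex_nonneg: "0 \<le> (\<integral>\<omega>. ex u I \<omega> \<partial>M)"
  by (rule integral_nonneg_AE) (auto intro!: AE_I2 less_imp_le[OF ex_pos])

lemma blk_prod:
  assumes L: "L \<ge> 1"
  shows "(\<integral>\<omega>. ex u (Ipar n L p r) \<omega> \<partial>M)
     \<le> (\<Prod>b\<in>{b. b < r \<and> b mod 2 = p}. (\<integral>\<omega>. ex u (Blk n L b) \<omega> \<partial>M) + phi_mix M X L * exp (\<bar>u\<bar> * L))"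
proof (induction r)
  case 0
  then show ?case by (simp add: Ipar_0 ex_empty)
next
  case (Suc r)
  let ?f = "\<lambda>b. (\<integral>\<omega>. ex u (Blk n L b) \<omega> \<partial>M) + phi_mix M X L * exp (\<bar>u\<bar> * L)"
  have phi0: "0 \<le> phi_mix M X L" using phi_mix_bound(1)[of X, OF rvX] .
  show ?case
  proof (cases "r mod 2 = p")
    case False
    then have "{b. b < Suc r \<and> b mod 2 = p} = {b. b < r \<and> b mod 2 = p}" by (auto simp: less_Suc_eq)
    then show ?thesis using Suc False by (simp add: Ipar_Suc)
  next
    case True
    have eq: "{b. b < Suc r \<and> b mod 2 = p} = insert r {b. b < r \<and> b mod 2 = p}" using True by auto
    have key: "(\<integral>\<omega>. ex u (Ipar n L p r \<union> Blk n L r) \<omega> \<partial>M) \<le> (\<integral>\<omega>. ex u (Ipar n L p r) \<omega> \<partial>M) * ?f r"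
    proof (cases "Ipar n L p r = {}")
      case True
      have "(\<integral>\<omega>. ex u (Blk n L r) \<omega> \<partial>M) \<le> ?f r" using phi0 by simp
      then show ?thesis using True by (simp add: ex_empty)
    next
      case False
      then have r1: "r \<ge> 1" using Ipar_0 by (cases r) auto
      define k where "k = max 1 ((r - 1) * L)"
      have k: "k \<ge> 1" by (simp add: k_def)
      have kL: "k + L \<le> r * L + 1"
      proof (cases "(r - 1) * L \<ge> 1")
        case True
        then have "k = (r - 1) * L" by (simp add: k_def)
        moreover have "(r - 1) * L + L = r * L" using r1 by (cases r) auto
        ultimately show ?thesis by simp
      next
        case False
        then have "(r - 1) * L = 0" by linarith
        then have "r - 1 = 0" using L by simp
        then have "r = 1" using r1 by simp
        then show ?thesis using False by (simp add: k_def)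
      qed
      have I'sub: "Blk n L r \<subseteq> {k + L..}" using Blk_sub[OF L, of n r] kL by auto
      have "(\<integral>\<omega>. ex u (Ipar n L p r \<union> Blk n L r) \<omega> \<partial>M)
          \<le> (\<integral>\<omega>. ex u (Ipar n L p r) \<omega> \<partial>M) * ((\<integral>\<omega>. ex u (Blk n L r) \<omega> \<partial>M) + phi_mix M X L * exp (\<bar>u\<bar> * card (Blk n L r)))"
        by (rule ex_mix[OF k L Ipar_fin Blk_fin _ I'sub]) (use Ipar_sub[OF L True] in \<open>simp add: k_def\<close>)
      also have "\<dots> \<le> (\<integral>\<omega>. ex u (Ipar n L p r) \<omega> \<partial>M) * ?f r"
        using Blk_card[OF L, of n r] phi0
        by (intro mult_left_mono add_left_mono Eex_nonneg) (auto intro!: mult_left_mono mult_left_mono)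
      finally show ?thesis .
    qed
    have fpos: "0 \<le> ?f r" using phi0 Eex_nonneg by (intro add_nonneg_nonneg) auto
    have "(\<integral>\<omega>. ex u (Ipar n L p (Suc r)) \<omega> \<partial>M) \<le> (\<integral>\<omega>. ex u (Ipar n L p r) \<omega> \<partial>M) * ?f r"
      using key True by (simp add: Ipar_Suc)
    also have "\<dots> \<le> (\<Prod>b\<in>{b. b < r \<and> b mod 2 = p}. ?f b) * ?f r"
      by (rule mult_right_mono[OF Suc.IH fpos])
    also have "\<dots> = (\<Prod>b\<in>{b. b < Suc r \<and> b mod 2 = p}. ?f b)"
      unfolding eq by (subst prod.insert) (auto simp: mult.commute)
    finally show ?thesis .
  qed
qed

end

context blk
begin

lemma Phi_nonneg: "(\<And>D. (\<Sum>d=1..D. phi_mix M X d) \<le> \<Phi>) \<Longrightarrow> 0 \<le> \<Phi>"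
proof -
  assume "\<And>D. (\<Sum>d=1..D. phi_mix M X d) \<le> \<Phi>"
  from this[of 0] show ?thesis by simp
qed

lemma mgf_total:
  fixes u :: real
  assumes Phi: "\<And>D. (\<Sum>d=1..D. phi_mix M X d) \<le> \<Phi>" and L: "L \<ge> 1" and u: "\<bar>u\<bar> * L \<le> 1"
  shows "(\<integral>\<omega>. ex u (Ipar n L p r) \<omega> \<partial>M)
     \<le> exp (real r * (u\<^sup>2 * L * q * (1 + 2 * \<Phi>) + phi_mix M X L * exp 1))"
proof -
  define x where "x = u\<^sup>2 * L * q * (1 + 2 * \<Phi>) + phi_mix M X L * exp 1"
  define T where "T = {b. b < r \<and> b mod 2 = p}"
  have Phi0: "0 \<le> \<Phi>" using Phi_nonneg[OF Phi] .
  have phi0: "0 \<le> phi_mix M X L" using phi_mix_bound(1)[of X, OF rvX] .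
  have x0: "0 \<le> x" unfolding x_def using Phi0 phi0 q_bounds by (intro add_nonneg_nonneg mult_nonneg_nonneg) auto
  have fb: "(\<integral>\<omega>. ex u (Blk n L b) \<omega> \<partial>M) + phi_mix M X L * exp (\<bar>u\<bar> * L) \<le> exp x" for b
  proof -
    have cL: "card (Blk n L b) \<le> L" by (rule Blk_card[OF L])
    have uc: "\<bar>u\<bar> * card (Blk n L b) \<le> 1"
      using u cL by (meson abs_ge_zero mult_left_mono of_nat_mono order_trans)
    have "(\<integral>\<omega>. ex u (Blk n L b) \<omega> \<partial>M) \<le> 1 + u\<^sup>2 * (real (card (Blk n L b)) * q * (1 + 2 * \<Phi>))"
      by (rule mgf_block[OF Phi Blk_fin Blk_pos uc])
    also have "\<dots> \<le> 1 + u\<^sup>2 * (real L * q * (1 + 2 * \<Phi>))"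
      using cL q_bounds Phi0 by (intro add_left_mono mult_left_mono mult_right_mono) auto
    finally have 1: "(\<integral>\<omega>. ex u (Blk n L b) \<omega> \<partial>M) \<le> 1 + u\<^sup>2 * (real L * q * (1 + 2 * \<Phi>))" .
    have 2: "phi_mix M X L * exp (\<bar>u\<bar> * L) \<le> phi_mix M X L * exp 1"
      using u phi0 by (intro mult_left_mono) auto
    have "(\<integral>\<omega>. ex u (Blk n L b) \<omega> \<partial>M) + phi_mix M X L * exp (\<bar>u\<bar> * L) \<le> 1 + x"
      using 1 2 unfolding x_def by (simp add: algebra_simps)
    also have "\<dots> \<le> exp x" by (rule exp_ge_add_one_self)
    finally show ?thesis .
  qed
  have "(\<integral>\<omega>. ex u (Ipar n L p r) \<omega> \<partial>M)
     \<le> (\<Prod>b\<in>T. (\<integral>\<omega>. ex u (Blk n L b) \<omega> \<partial>M) + phi_mix M X L * exp (\<bar>u\<bar> * L))"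
    unfolding T_def by (rule blk_prod[OF L])
  also have "\<dots> \<le> (\<Prod>b\<in>T. exp x)"
    by (rule prod_mono) (use fb phi0 Eex_nonneg in \<open>auto intro!: add_nonneg_nonneg\<close>)
  also have "\<dots> = exp x ^ card T" by simp
  also have "\<dots> \<le> exp x ^ r"
  proof (rule power_increasing)
    have "T \<subseteq> {..<r}" by (auto simp: T_def)
    then show "card T \<le> r" using card_mono[of "{..<r}" T] by simp
    show "1 \<le> exp x" using x0 by simp
  qed
  also have "\<dots> = exp (real r * x)" by (simp add: exp_of_nat_mult)
  finally show ?thesis unfolding x_def .
qed

lemma markov:
  fixes t \<sigma> lam :: real
  assumes t: "t > 0"
  shows "prob {\<omega>\<in>space M. lam \<le> \<sigma> * S I \<omega>} \<le> exp (- t * lam) * (\<integral>\<omega>. ex (\<sigma> * t) I \<omega> \<partial>M)"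
proof -
  let ?E = "{\<omega>\<in>space M. lam \<le> \<sigma> * S I \<omega>}"
  have Es: "?E \<in> sets M" by measurable
  have "prob ?E = (\<integral>\<omega>. indicator ?E \<omega> \<partial>M)" by simp
  also have "\<dots> \<le> (\<integral>\<omega>. exp (- t * lam) * ex (\<sigma> * t) I \<omega> \<partial>M)"
  proof (rule integral_mono)
    show "integrable M (indicat_real ?E)" using Es by (auto intro!: integrable_real_indicator simp: less_top[symmetric])
    show "integrable M (\<lambda>\<omega>. exp (- t * lam) * ex (\<sigma> * t) I \<omega>)" by (simp add: ex_int)
    fix \<omega> assume w: "\<omega> \<in> space M"
    show "indicator ?E \<omega> \<le> exp (- t * lam) * ex (\<sigma> * t) I \<omega>"
    proof (cases "\<omega> \<in> ?E")
      case True
      then have "0 \<le> t * (\<sigma> * S I \<omega> - lam)" using t by simp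
      then have "1 \<le> exp (- t * lam + \<sigma> * t * S I \<omega>)" by (simp add: algebra_simps)
      then show ?thesis using True by (simp add: ex_def exp_add[symmetric])
    next
      case False
      then show ?thesis by (simp add: ex_def)
    qed
  qed
  also have "\<dots> = exp (- t * lam) * (\<integral>\<omega>. ex (\<sigma> * t) I \<omega> \<partial>M)" by simp
  finally show ?thesis .
qed

lemma S_split:
  assumes L: "L \<ge> 1"
  shows "S {1..n} \<omega> = S (Ipar n L 0 (n div L + 1)) \<omega> + S (Ipar n L 1 (n div L + 1)) \<omega>"
proof -
  have lt: "(i - 1) div L < n div L + 1" if "i \<in> {1..n}" for i
  proof -
    have "i - 1 \<le> n" using that by auto
    then have "(i - 1) div L \<le> n div L" by (rule div_le_mono)
    then show ?thesis by simp
  qed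
  have "{1..n} = Ipar n L 0 (n div L + 1) \<union> Ipar n L 1 (n div L + 1)"
    using lt by (auto simp: Ipar_def)
  moreover have "Ipar n L 0 (n div L + 1) \<inter> Ipar n L 1 (n div L + 1) = {}"
    by (auto simp: Ipar_def)
  ultimately show ?thesis unfolding S_def by (simp add: sum.union_disjoint)
qed

lemma exp_ineq:
  fixes t lam :: real
  assumes Phi: "\<And>D. (\<Sum>d=1..D. phi_mix M X d) \<le> \<Phi>" and L: "L \<ge> 1" and t: "t > 0" "t * L \<le> 1"
  shows "prob {\<omega>\<in>space M. 2 * lam \<le> \<bar>S {1..n} \<omega>\<bar>}
     \<le> 4 * exp (- t * lam + real (n div L + 1) * (t\<^sup>2 * L * q * (1 + 2 * \<Phi>) + phi_mix M X L * exp 1))"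
proof -
  define R where "R = n div L + 1"
  define Ev where "Ev = (\<lambda>(p::nat, \<sigma>::real). {\<omega>\<in>space M. lam \<le> \<sigma> * S (Ipar n L p R) \<omega>})"
  define K where "K = ({0, 1} \<times> {1, -1} :: (nat \<times> real) set)"
  define bnd where "bnd = exp (- t * lam + real R * (t\<^sup>2 * L * q * (1 + 2 * \<Phi>) + phi_mix M X L * exp 1))"
  have sub: "{\<omega>\<in>space M. 2 * lam \<le> \<bar>S {1..n} \<omega>\<bar>} \<subseteq> (\<Union>k\<in>K. Ev k)"
  proof
    fix \<omega> assume "\<omega> \<in> {\<omega>\<in>space M. 2 * lam \<le> \<bar>S {1..n} \<omega>\<bar>}"
    then have w: "\<omega> \<in> space M" and h: "2 * lam \<le> \<bar>S (Ipar n L 0 R) \<omega> + S (Ipar n L 1 R) \<omega>\<bar>"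
      using S_split[OF L, of n \<omega>] by (auto simp: R_def)
    then have "lam \<le> S (Ipar n L 0 R) \<omega> \<or> lam \<le> S (Ipar n L 1 R) \<omega> \<or> lam \<le> - S (Ipar n L 0 R) \<omega> \<or> lam \<le> - S (Ipar n L 1 R) \<omega>"
      by linarith
    then show "\<omega> \<in> (\<Union>k\<in>K. Ev k)" using w unfolding K_def Ev_def by auto
  qed
  have Evs: "Ev k \<in> sets M" for k unfolding Ev_def by (cases k) (simp only: case_prod_conv, measurable)
  have "prob {\<omega>\<in>space M. 2 * lam \<le> \<bar>S {1..n} \<omega>\<bar>} \<le> prob (\<Union>k\<in>K. Ev k)"
    by (rule finite_measure_mono[OF sub]) (auto simp: K_def intro!: Evs sets.Un)
  also have "\<dots> \<le> (\<Sum>k\<in>K. prob (Ev k))"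
    by (rule finite_measure_subadditive_finite) (auto simp: K_def Evs)
  also have "\<dots> \<le> real (card K) * bnd"
  proof (rule sum_bounded_above)
    fix k assume k: "k \<in> K"
    then obtain p \<sigma> where k': "k = (p, \<sigma>)" "\<bar>\<sigma>\<bar> = 1" by (auto simp: K_def)
    have u: "\<bar>\<sigma> * t\<bar> * L \<le> 1" using k' t by (simp add: abs_mult)
    have "prob (Ev k) \<le> exp (- t * lam) * (\<integral>\<omega>. ex (\<sigma> * t) (Ipar n L p R) \<omega> \<partial>M)"
      unfolding k' Ev_def using markov[OF t(1), of lam \<sigma> "Ipar n L p R"] by simp
    also have "\<dots> \<le> exp (- t * lam) * exp (real R * ((\<sigma> * t)\<^sup>2 * L * q * (1 + 2 * \<Phi>) + phi_mix M X L * exp 1))"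
      by (intro mult_left_mono mgf_total[OF Phi L u]) simp
    also have "\<dots> = bnd"
    proof -
      have "\<sigma>\<^sup>2 = 1" using k'(2) by (metis power2_abs power_one)
      then show ?thesis by (simp add: bnd_def exp_add[symmetric] power_mult_distrib)
    qed
    finally show "prob (Ev k) \<le> bnd" .
  qed
  also have "real (card K) = 4" by (simp add: K_def)
  finally show ?thesis by (simp add: bnd_def R_def)
qed

end

lemma emp_df_card: "emp_df X n \<omega> x = real (card {i\<in>{1..n}. X i \<omega> \<le> x}) / real n"
proof -
  have "(\<Sum>i=1..n. if X i \<omega> \<le> x then 1 else 0 :: real) = (\<Sum>i\<in>{i\<in>{1..n}. X i \<omega> \<le> x}. 1)"
    by (rule sum.inter_filter[symmetric]) simp
  then show ?thesis by (simp add: emp_df_def)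
qed

lemma emp_df_mono: "x \<le> y \<Longrightarrow> emp_df X n \<omega> x \<le> emp_df X n \<omega> y"
  unfolding emp_df_def by (intro mult_left_mono sum_mono) auto

lemma emp_df_cong: "(\<And>i. i \<in> {1..n} \<Longrightarrow> (X i \<omega> \<le> x \<longleftrightarrow> X i \<omega> \<le> y)) \<Longrightarrow> emp_df X n \<omega> x = emp_df X n \<omega> y"
  unfolding emp_df_def by (auto intro!: sum.cong)

lemma emp_df_nonneg: "0 \<le> emp_df X n \<omega> x"
  unfolding emp_df_def by (intro mult_nonneg_nonneg sum_nonneg) auto

lemma emp_quantile:
  assumes n: "n \<ge> 1" and inj: "inj_on (\<lambda>i. X i \<omega>) {1..n}" and p: "0 < p" "p \<le> 1"
  shows "p \<le> emp_df X n \<omega> (quantile (emp_df X n \<omega>) p)"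
    and "emp_df X n \<omega> (quantile (emp_df X n \<omega>) p) < p + 1 / real n"
proof -
  define Fn where "Fn = emp_df X n \<omega>"
  define D where "D = (\<lambda>i. X i \<omega>) ` {1..n}"
  have Dfin: "finite D" and Dne: "D \<noteq> {}" using n by (auto simp: D_def)
  define C where "C = {x\<in>D. p \<le> Fn x}"
  have Cfin: "finite C" using Dfin by (simp add: C_def)
  have "Fn (Max D) = 1"
  proof -
    have "{i\<in>{1..n}. X i \<omega> \<le> Max D} = {1..n}" using Dfin by (auto simp: D_def)
    then show ?thesis using n by (simp add: Fn_def emp_df_card)
  qed
  then have "Max D \<in> C" using Dfin Dne p by (simp add: C_def)
  then have Cne: "C \<noteq> {}" by auto
  define z where "z = Min C"
  have zC: "z \<in> C" using Cfin Cne by (simp add: z_def)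
  have Fz: "p \<le> Fn z" using zC by (simp add: C_def)
  have Fn0: "Fn x = 0" if "\<And>i. i \<in> {1..n} \<Longrightarrow> \<not> X i \<omega> \<le> x" for x
    using that by (simp add: Fn_def emp_df_card)
  have setq: "{x. p \<le> Fn x} = {z..}"
  proof safe
    fix x assume x: "p \<le> Fn x"
    define W where "W = {d\<in>D. d \<le> x}"
    have "W \<noteq> {}"
    proof
      assume "W = {}"
      then have "Fn x = 0" by (intro Fn0) (auto simp: W_def D_def)
      then show False using x p by simp
    qed
    moreover have "finite W" using Dfin by (simp add: W_def)
    ultimately have wW: "Max W \<in> W" by simp
    have "Fn (Max W) = Fn x" unfolding Fn_def
    proof (rule emp_df_cong)
      fix i assume i: "i \<in> {1..n}"
      have "X i \<omega> \<le> x \<Longrightarrow> X i \<omega> \<le> Max W"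
        using i \<open>finite W\<close> by (intro Max_ge) (auto simp: W_def D_def)
      then show "X i \<omega> \<le> Max W \<longleftrightarrow> X i \<omega> \<le> x" using wW by (auto simp: W_def)
    qed
    then have "Max W \<in> C" using wW x by (simp add: C_def W_def)
    then have "z \<le> Max W" unfolding z_def using Cfin by simp
    then show "z \<le> x" using wW by (simp add: W_def)
  next
    fix x assume "z \<le> x"
    then show "p \<le> Fn x" using Fz emp_df_mono[of z x X n \<omega>] by (simp add: Fn_def)
  qed
  have qz: "quantile Fn p = z" unfolding quantile_def setq by simp
  show "p \<le> emp_df X n \<omega> (quantile (emp_df X n \<omega>) p)" using Fz qz by (simp add: Fn_def)
  obtain j where j: "j \<in> {1..n}" "X j \<omega> = z" using zC by (auto simp: C_def D_def)
  have cnt: "card {i\<in>{1..n}. X i \<omega> \<le> z} = card {i\<in>{1..n}. X i \<omega> < z} + 1"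
  proof -
    have "{i\<in>{1..n}. X i \<omega> \<le> z} = insert j {i\<in>{1..n}. X i \<omega> < z}"
    proof (rule set_eqI, rule iffI)
      fix i assume "i \<in> {i\<in>{1..n}. X i \<omega> \<le> z}"
      then have i: "i \<in> {1..n}" "X i \<omega> \<le> z" by auto
      show "i \<in> insert j {i\<in>{1..n}. X i \<omega> < z}"
      proof (cases "X i \<omega> < z")
        case False
        then have "X i \<omega> = X j \<omega>" using i j by simp
        then have "i = j" using inj i j by (auto dest: inj_onD)
        then show ?thesis by simp
      qed (use i in auto)
    qed (use j in auto)
    moreover have "j \<notin> {i\<in>{1..n}. X i \<omega> < z}" using j by simp
    ultimately show ?thesis by simp
  qed
  have "Fn z < p + 1 / real n"
  proof (cases "{i\<in>{1..n}. X i \<omega> < z} = {}")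
    case True
    then have "Fn z = 1 / real n" using cnt by (simp add: Fn_def emp_df_card)
    then show ?thesis using p by simp
  next
    case False
    define V where "V = {d\<in>D. d < z}"
    have Vne: "V \<noteq> {}" using False by (auto simp: V_def D_def)
    have Vfin: "finite V" using Dfin by (simp add: V_def)
    define w where "w = Max V"
    have wV: "w \<in> V" using Vne Vfin by (simp add: w_def)
    have same: "{i\<in>{1..n}. X i \<omega> \<le> w} = {i\<in>{1..n}. X i \<omega> < z}"
    proof safe
      fix i assume "i \<in> {1..n}" "X i \<omega> \<le> w" then show "X i \<omega> < z" using wV by (auto simp: V_def)
    next
      fix i assume i: "i \<in> {1..n}" "X i \<omega> < z"
      then have "X i \<omega> \<in> V" by (auto simp: V_def D_def)
      then show "X i \<omega> \<le> w" using Vfin by (simp add: w_def)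
    qed
    have "w \<notin> C"
    proof
      assume "w \<in> C"
      then have "z \<le> w" using Cfin by (simp add: z_def)
      then show False using wV by (simp add: V_def)
    qed
    then have "Fn w < p" using wV by (auto simp: C_def V_def)
    moreover have "Fn z = Fn w + 1 / real n"
      using cnt same by (simp add: Fn_def emp_df_card add_divide_distrib)
    ultimately show ?thesis by simp
  qed
  then   show "emp_df X n \<omega> (quantile (emp_df X n \<omega>) p) < p + 1 / real n"
    using qz by (simp add: Fn_def)
qed

lemma lip_gen:
  fixes g g' :: "real \<Rightarrow> real"
  assumes der: "\<And>x. x \<in> {a..b} \<Longrightarrow> (g has_real_derivative g' x) (at x)"
    and bd: "\<And>x. x \<in> {a..b} \<Longrightarrow> \<bar>g' x\<bar> \<le> K"
    and x: "x \<in> {a..b}" and y: "y \<in> {a..b}"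
  shows "\<bar>g y - g x\<bar> \<le> K * \<bar>y - x\<bar>"
proof -
  have main: "\<bar>g v - g u\<bar> \<le> K * \<bar>v - u\<bar>" if uv: "u < v" "u \<in> {a..b}" "v \<in> {a..b}" for u v
  proof -
    obtain z where z: "u < z" "z < v" "g v - g u = (v - u) * g' z"
      using MVT2[OF uv(1), of g g'] der uv by auto
    have "z \<in> {a..b}" using z uv by auto
    then have "\<bar>g' z\<bar> \<le> K" by (rule bd)
    then show ?thesis using z uv by (simp add: abs_mult mult.commute mult_right_mono)
  qed
  show ?thesis
  proof (cases x y rule: linorder_cases)
    case less then show ?thesis using main[OF less x y] by simp
  next
    case equal
    have "0 \<le> \<bar>g' x\<bar>" by simp
    then show ?thesis using equal by simp
  next
    case greater then show ?thesis using main[OF greater y x] by (simp add: abs_minus_commute)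
  qed
qed

lemma taylor_gen:
  fixes F f f' :: "real \<Rightarrow> real"
  assumes dF: "\<And>x. x \<in> {c-d..c+d} \<Longrightarrow> (F has_real_derivative f x) (at x)"
    and df: "\<And>x. x \<in> {c-d..c+d} \<Longrightarrow> (f has_real_derivative f' x) (at x)"
    and bd: "\<And>x. x \<in> {c-d..c+d} \<Longrightarrow> \<bar>f' x\<bar> \<le> K"
    and x: "x \<in> {c-d..c+d}" and d: "d \<ge> 0"
  shows "\<bar>F x - F c - f c * (x - c)\<bar> \<le> K * (x - c)\<^sup>2"
proof -
  define g where "g y = F y - f c * y" for y
  have c: "c \<in> {c-d..c+d}" using d by simp
  have "\<bar>g x - g c\<bar> \<le> (K * \<bar>x - c\<bar>) * \<bar>x - c\<bar>"
  proof (rule lip_gen[where g' = "\<lambda>y. f y - f c"])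
    fix y assume y: "y \<in> {min c x..max c x}"
    then have yd: "y \<in> {c-d..c+d}" using x c by auto
    show "(g has_real_derivative f y - f c) (at y)" unfolding g_def
      by (rule derivative_eq_intros dF[OF yd] | simp)+
    have "\<bar>f y - f c\<bar> \<le> K * \<bar>y - c\<bar>" by (rule lip_gen[OF df bd c yd])
    also have "\<dots> \<le> K * \<bar>x - c\<bar>"
    proof (rule mult_left_mono)
      show "\<bar>y - c\<bar> \<le> \<bar>x - c\<bar>" using y by auto
      have "0 \<le> \<bar>f' c\<bar>" by simp
      then show "0 \<le> K" using bd[OF c] by linarith
    qed
    finally show "\<bar>f y - f c\<bar> \<le> K * \<bar>x - c\<bar>" .
  qed auto
  then show ?thesis by (simp add: g_def power2_eq_square algebra_simps abs_mult_self)
qed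

lemma quantile_props:
  fixes G :: "real \<Rightarrow> real"
  assumes mono: "\<And>x y. x \<le> y \<Longrightarrow> G x \<le> G y"
    and bot: "(G \<longlongrightarrow> 0) at_bot" and top: "(G \<longlongrightarrow> 1) at_top" and p: "0 < p" "p < 1"
  shows "\<And>x. x < quantile G p \<Longrightarrow> G x < p"
    and "\<And>x. quantile G p < x \<Longrightarrow> p \<le> G x"
    and "isCont G (quantile G p) \<Longrightarrow> G (quantile G p) = p"
proof -
  define S where "S = {x. p \<le> G x}"
  have "eventually (\<lambda>x. G x > p) at_top" using order_tendstoD(1)[OF top p(2)] .
  then obtain x1 where "\<And>x. x \<ge> x1 \<Longrightarrow> G x > p" by (auto simp: eventually_at_top_linorder)
  then have Sne: "S \<noteq> {}" unfolding S_def by (metis less_imp_le mem_Collect_eq order_refl empty_iff)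
  have "eventually (\<lambda>x. G x < p) at_bot" using order_tendstoD(2)[OF bot p(1)] .
  then obtain x0 where x0: "\<And>x. x \<le> x0 \<Longrightarrow> G x < p" by (auto simp: eventually_at_bot_linorder)
  have bdd: "bdd_below S" unfolding S_def bdd_below_def
    by (rule exI[of _ x0]) (metis mem_Collect_eq not_le x0 less_imp_le not_less)
  have qS: "quantile G p = Inf S" by (simp add: quantile_def S_def)
  show lt: "G x < p" if "x < quantile G p" for x
  proof (rule ccontr)
    assume "\<not> G x < p"
    then have "x \<in> S" by (simp add: S_def)
    then have "Inf S \<le> x" using bdd by (rule cInf_lower)
    then show False using that qS by simp
  qed
  show ge: "p \<le> G x" if "quantile G p < x" for x
  proof -
    have "Inf S < x" using that qS by simp
    then obtain s where "s \<in> S" "s < x" using cInf_less_iff[OF Sne bdd] by auto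
    then show ?thesis using mono[of s x] by (simp add: S_def)
  qed
  assume cont: "isCont G (quantile G p)"
  let ?q = "quantile G p"
  have "(G \<longlongrightarrow> G ?q) (at_left ?q)" using cont by (simp add: isCont_def filterlim_at_split)
  moreover have "eventually (\<lambda>x. G x \<le> p) (at_left ?q)"
  proof -
    have "eventually (\<lambda>x. x < ?q) (at_left ?q)" by (simp add: eventually_at_filter)
    then show ?thesis by eventually_elim (auto intro: less_imp_le lt)
  qed
  ultimately have 1: "G ?q \<le> p" by (rule tendsto_upperbound) simp
  have "(G \<longlongrightarrow> G ?q) (at_right ?q)" using cont by (simp add: isCont_def filterlim_at_split)
  moreover have "eventually (\<lambda>x. p \<le> G x) (at_right ?q)"
    using eventually_at_right_less[of ?q] by eventually_elim (auto intro: ge)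
  ultimately have 2: "p \<le> G ?q" by (rule tendsto_lowerbound) simp
  show "G ?q = p" using 1 2 by simp
qed

context prob_space
begin

lemma marginal_cdf:
  fixes X :: "'a \<Rightarrow> real"
  assumes rv: "X \<in> borel_measurable M" and marg: "\<And>x. prob {\<omega>\<in>space M. X \<omega> \<le> x} = F x"
  shows "F = cdf (distr M borel X)"
proof
  fix x
  have "cdf (distr M borel X) x = measure (distr M borel X) {..x}" by (simp add: cdf_def)
  also have "\<dots> = prob (X -` {..x} \<inter> space M)" using rv by (simp add: measure_distr)
  also have "X -` {..x} \<inter> space M = {\<omega>\<in>space M. X \<omega> \<le> x}" by auto
  finally show "F x = cdf (distr M borel X) x" using marg by simp
qed

lemma marginal_props:
  fixes X :: "'a \<Rightarrow> real"
  assumes rv: "X \<in> borel_measurable M" and marg: "\<And>x. prob {\<omega>\<in>space M. X \<omega> \<le> x} = F x"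
  shows "\<And>x y. x \<le> y \<Longrightarrow> F x \<le> F y" "(F \<longlongrightarrow> 0) at_bot" "(F \<longlongrightarrow> 1) at_top"
proof -
  interpret rd: real_distribution "distr M borel X" using rv by simp
  note Fe = marginal_cdf[OF rv marg]
  show "F x \<le> F y" if "x \<le> y" for x y using rd.cdf_nondecreasing[OF that] Fe by simp
  show "(F \<longlongrightarrow> 0) at_bot" using rd.cdf_lim_at_bot Fe by simp
  show "(F \<longlongrightarrow> 1) at_top" using rd.cdf_lim_at_top_prob Fe by simp
qed

end

context prob_space
begin

lemma tail_bound:
  fixes X :: "nat \<Rightarrow> 'a \<Rightarrow> real" and t lam r qb Cp \<Phi> :: real
  assumes rv: "\<And>i. X i \<in> borel_measurable M" and Bb: "B \<in> sets borel"
    and qA: "\<And>i. i \<ge> 1 \<Longrightarrow> prob (X i -` B \<inter> space M) = q" and qb: "q \<le> qb"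
    and Phi: "\<And>D. (\<Sum>d=1..D. phi_mix M X d) \<le> \<Phi>"
    and Cp: "\<And>m. m \<ge> 1 \<Longrightarrow> phi_mix M X m \<le> Cp / real m ^ 3"
    and n: "n \<ge> 1" and r: "r ^ 4 = real n" "r \<ge> 0" and t: "t > 0" "t * r \<le> 1"
  shows "prob {\<omega>\<in>space M. 2 * lam \<le> \<bar>\<Sum>i\<in>{1..n}. indicator (X i -` B \<inter> space M) \<omega> - q\<bar>}
     \<le> 4 * exp (- t * lam + 2 * n * t\<^sup>2 * qb * (1 + 2 * \<Phi>) + 32 * exp 1 * Cp)"
proof -
  interpret blk M X B q using rv Bb qA by unfold_locales auto
  define L where "L = nat \<lfloor>r\<rfloor>"
  have r1: "r \<ge> 1"
  proof (rule ccontr)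
    assume "\<not> r \<ge> 1"
    then have "r ^ 4 < 1 ^ 4" using r(2) by (intro power_strict_mono) auto
    then show False using r n by simp
  qed
  have L1: "L \<ge> 1" using r1 by (simp add: L_def le_nat_iff)
  have Lr: "real L \<le> r" "r < real L + 1" using r1 by (auto simp: L_def)
  have r2L: "r \<le> 2 * real L" using Lr L1 by simp
  have rn: "r \<le> real n"
  proof -
    have "r ^ 1 \<le> r ^ 4" using r1 by (intro power_increasing) auto
    then show ?thesis using r by simp
  qed
  have Ln: "L \<le> n" using Lr rn by linarith
  have tL: "t * L \<le> 1" using t Lr by (meson less_imp_le mult_left_mono order_trans)
  have Phi0: "0 \<le> \<Phi>" using Phi_nonneg[OF Phi] .
  have q0: "0 \<le> q" using q_bounds by simp
  have R: "real (n div L + 1) \<le> 2 * real n / real L"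
  proof -
    have "real (n div L) \<le> real n / real L" by (rule of_nat_div_le_of_nat)
    moreover have "1 \<le> real n / real L" using Ln L1 by simp
    ultimately show ?thesis by simp
  qed
  have ev: "prob {\<omega>\<in>space M. 2 * lam \<le> \<bar>S {1..n} \<omega>\<bar>}
     \<le> 4 * exp (- t * lam + real (n div L + 1) * (t\<^sup>2 * L * q * (1 + 2 * \<Phi>) + phi_mix M X L * exp 1))"
    by (rule exp_ineq[OF Phi L1 t(1) tL])
  have T1: "real (n div L + 1) * (t\<^sup>2 * L * q * (1 + 2 * \<Phi>)) \<le> 2 * real n * t\<^sup>2 * qb * (1 + 2 * \<Phi>)"
  proof -
    have "real (n div L + 1) * (t\<^sup>2 * L * q * (1 + 2 * \<Phi>)) \<le> (2 * real n / real L) * (t\<^sup>2 * L * q * (1 + 2 * \<Phi>))"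
      using R q0 Phi0 by (intro mult_right_mono) auto
    also have "\<dots> = 2 * real n * t\<^sup>2 * q * (1 + 2 * \<Phi>)" using L1 by simp
    also have "\<dots> \<le> 2 * real n * t\<^sup>2 * qb * (1 + 2 * \<Phi>)" using qb Phi0 by (intro mult_right_mono mult_left_mono) auto
    finally show ?thesis .
  qed
  have T2: "real (n div L + 1) * (phi_mix M X L * exp 1) \<le> 32 * exp 1 * Cp"
  proof -
    have phiL: "phi_mix M X L \<le> Cp / real L ^ 3" using Cp L1 by simp
    have phi0: "0 \<le> phi_mix M X L" using phi_mix_bound(1)[of X, OF rv] .
    have "0 \<le> Cp / real L ^ 3" using phiL phi0 by linarith
    then have Cp0: "0 \<le> Cp" using L1 by (simp add: zero_le_divide_iff)
    have "real (n div L + 1) * (phi_mix M X L * exp 1) \<le> (2 * real n / real L) * (Cp / real L ^ 3 * exp 1)"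
      using R phiL phi0 by (intro mult_mono) auto
    also have "\<dots> = 2 * exp 1 * Cp * (real n / real L ^ 4)"
    proof -
      have "\<And>y a c e. (y::real) > 0 \<Longrightarrow> (2 * a / y) * (c / y ^ 3 * e) = 2 * e * c * (a / y ^ 4)"
        by (simp add: field_simps eval_nat_numeral)
      then show ?thesis using L1 by simp
    qed
    also have "\<dots> \<le> 2 * exp 1 * Cp * 16"
    proof (intro mult_left_mono)
      have "real n = r ^ 4" using r by simp
      also have "\<dots> \<le> (2 * real L) ^ 4" using r2L r by (intro power_mono) auto
      also have "(2 * real L) ^ 4 = 16 * real L ^ 4" by (simp add: power_mult_distrib)
      finally have "real n \<le> 16 * real L ^ 4" .
      then show "real n / real L ^ 4 \<le> 16" using L1 by (simp add: pos_divide_le_eq)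
    qed (use Cp0 in auto)
    finally show ?thesis by simp
  qed
  have E1: "4 * exp (- t * lam + real (n div L + 1) * (t\<^sup>2 * L * q * (1 + 2 * \<Phi>) + phi_mix M X L * exp 1))
      \<le> 4 * exp (- t * lam + 2 * real n * t\<^sup>2 * qb * (1 + 2 * \<Phi>) + 32 * exp 1 * Cp)"
  proof -
    have "- t * lam + real (n div L + 1) * (t\<^sup>2 * L * q * (1 + 2 * \<Phi>) + phi_mix M X L * exp 1)
      \<le> - t * lam + 2 * real n * t\<^sup>2 * qb * (1 + 2 * \<Phi>) + 32 * exp 1 * Cp"
      using T1 T2 by (simp only: distrib_left)
    then show ?thesis by simp
  qed
  have Seq: "{\<omega>\<in>space M. 2 * lam \<le> \<bar>S {1..n} \<omega>\<bar>}
     = {\<omega>\<in>space M. 2 * lam \<le> \<bar>\<Sum>i\<in>{1..n}. indicator (X i -` B \<inter> space M) \<omega> - q\<bar>}"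
    by (simp add: S_def Y_def A_def)
  show ?thesis using order_trans[OF ev E1] unfolding Seq .
qed

end

locale ms = prob_space M for M :: "'a measure" +
  fixes X :: "nat \<Rightarrow> 'a \<Rightarrow> real" and F f f' :: "real \<Rightarrow> real" and p :: real and N :: "real set"
  assumes rv: "\<And>i. X i \<in> borel_measurable M"
    and marginal: "\<And>i x. i \<ge> 1 \<Longrightarrow> measure M {\<omega> \<in> space M. X i \<omega> \<le> x} = F x"
    and mixing: "decseq (phi_mix M X)" "phi_mix M X \<longlonglongrightarrow> 0"
    and rate: "phi_mix M X \<in> O(\<lambda>n. real n powr (-3))"
    and ties: "\<And>i j. i \<ge> 1 \<Longrightarrow> j \<ge> 1 \<Longrightarrow> i \<noteq> j \<Longrightarrow>
                 measure M {\<omega> \<in> space M. X i \<omega> = X j \<omega>} = 0"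
    and p: "0 < p" "p < 1"
    and N: "open N" "quantile F p \<in> N"
    and dens: "\<And>x. x \<in> N \<Longrightarrow> (F has_real_derivative f x) (at x)"
    and fpos: "\<And>x. x \<in> N \<Longrightarrow> f x > 0"
    and fcont: "continuous_on N f"
    and fbdd: "bdd_above (f ` N)"
    and fderiv: "\<And>x. x \<in> N \<Longrightarrow> (f has_real_derivative f' x) (at x)"
    and f'bdd: "bounded (f' ` N)"
begin

definition "xi = quantile F p"

lemma F_basic: "\<And>x y. x \<le> y \<Longrightarrow> F x \<le> F y" "(F \<longlongrightarrow> 0) at_bot" "(F \<longlongrightarrow> 1) at_top"
  using marginal_props[of "X 1" F] rv marginal[of 1] by auto

lemma F_xi: "F xi = p"
  unfolding xi_def
  by (rule quantile_props(3)[where G=F and p=p, OF F_basic(1) F_basic(2) F_basic(3) p DERIV_isCont[OF dens[OF N(2)]]])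

lemma cst_ex:
  obtains d fB Bd where "d > 0" "{xi - d .. xi + d} \<subseteq> N" "\<And>x. x \<in> N \<Longrightarrow> f x \<le> fB"
    "\<And>x. x \<in> N \<Longrightarrow> \<bar>f' x\<bar> \<le> Bd" "0 < f xi"
proof -
  obtain d where d: "d > 0" "cball xi d \<subseteq> N" using N open_contains_cball unfolding xi_def by blast
  obtain fB where fB: "\<And>x. x \<in> N \<Longrightarrow> f x \<le> fB" using fbdd by (auto simp: bdd_above_def)
  obtain Bd where Bd: "\<And>x. x \<in> N \<Longrightarrow> \<bar>f' x\<bar> \<le> Bd" using f'bdd by (auto simp: bounded_iff)
  show ?thesis using that[OF d(1) _ fB Bd] d(2) fpos[OF N(2)] by (simp add: cball_eq_atLeastAtMost xi_def)
qed

lemma Cp_exists: "\<exists>Cp. \<forall>m\<ge>1. phi_mix M X m \<le> Cp / real m ^ 3"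
proof -
  obtain c where c: "c > 0" "eventually (\<lambda>n. norm (phi_mix M X n) \<le> c * norm (real n powr (-3))) at_top"
    using landau_o.bigE[OF rate] by blast
  then obtain n0 where n0: "\<And>n. n \<ge> n0 \<Longrightarrow> norm (phi_mix M X n) \<le> c * norm (real n powr (-3))"
    by (auto simp: eventually_at_top_linorder)
  define Cp where "Cp = max c (real n0 ^ 3)"
  have "phi_mix M X m \<le> Cp / real m ^ 3" if m: "m \<ge> 1" for m
  proof (cases "m \<ge> n0")
    case True
    have "real m powr (-3) = 1 / real m ^ 3" using m by (simp add: powr_minus powr_realpow divide_inverse)
    then have "phi_mix M X m \<le> c / real m ^ 3" using n0[OF True] by simp
    also have "\<dots> \<le> Cp / real m ^ 3" by (intro divide_right_mono) (auto simp: Cp_def)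
    finally show ?thesis .
  next
    case False
    have "phi_mix M X m \<le> 1" using phi_mix_bound(2)[of X, OF rv] .
    also have "1 \<le> real n0 ^ 3 / real m ^ 3" using False m by (simp add: power_mono)
    also have "\<dots> \<le> Cp / real m ^ 3" by (intro divide_right_mono) (auto simp: Cp_def)
    finally show ?thesis .
  qed
  then show ?thesis by blast
qed

lemma Phi_exists: "\<exists>\<Phi>. \<forall>D. (\<Sum>d=1..D. phi_mix M X d) \<le> \<Phi>"
proof -
  obtain Cp where Cp: "\<And>m. m \<ge> 1 \<Longrightarrow> phi_mix M X m \<le> Cp / real m ^ 3" using Cp_exists by blast
  define g where "g m = Cp * inverse (real m ^ 3)" for m :: nat
  have sg: "summable g" unfolding g_def by (intro summable_mult inverse_power_summable) auto
  have Cp0: "0 \<le> Cp" using Cp[of 1] phi_mix_bound(1)[of X, OF rv, of 1] by simp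
  have "(\<Sum>d=1..D. phi_mix M X d) \<le> suminf g" for D
  proof -
    have "(\<Sum>d=1..D. phi_mix M X d) \<le> (\<Sum>d=1..D. g d)"
      by (rule sum_mono) (use Cp in \<open>auto simp: g_def divide_inverse\<close>)
    also have "\<dots> \<le> suminf g" by (rule sum_le_suminf[OF sg]) (use Cp0 in \<open>auto simp: g_def\<close>)
    finally show ?thesis .
  qed
  then show ?thesis by blast
qed

lemma ind_le: "\<omega> \<in> space M \<Longrightarrow> indicator (X i -` {..x} \<inter> space M) \<omega> = (if X i \<omega> \<le> x then 1 else (0::real))"
  by (auto simp: indicator_def)

lemma sum_le_emp:
  assumes w: "\<omega> \<in> space M" and n: "n \<ge> 1"
  shows "(\<Sum>i\<in>{1..n}. indicator (X i -` {..x} \<inter> space M) \<omega> - F x) = real n * (emp_df X n \<omega> x - F x)"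
  using n by (simp add: ind_le[OF w] sum_subtractf emp_df_def algebra_simps)

lemma sum_int_emp:
  assumes w: "\<omega> \<in> space M" and n: "n \<ge> 1" and yx: "y \<le> x"
  shows "(\<Sum>i\<in>{1..n}. indicator (X i -` {y<..x} \<inter> space M) \<omega> - (F x - F y))
     = real n * (emp_df X n \<omega> x - emp_df X n \<omega> y - (F x - F y))"
proof -
  have ind: "indicator (X i -` {y<..x} \<inter> space M) \<omega> = (if X i \<omega> \<le> x then 1 else 0) - (if X i \<omega> \<le> y then 1 else (0::real))" for i
    using w yx by (auto simp: indicator_def)
  have "(\<Sum>i\<in>{1..n}. indicator (X i -` {y<..x} \<inter> space M) \<omega> - (F x - F y))
     = (\<Sum>i\<in>{1..n}. (if X i \<omega> \<le> x then 1 else 0)) - (\<Sum>i\<in>{1..n}. (if X i \<omega> \<le> y then 1 else (0::real))) - real n * (F x - F y)"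
    by (simp only: ind sum_subtractf) (simp add: algebra_simps)
  also have "\<dots> = real n * (emp_df X n \<omega> x - emp_df X n \<omega> y - (F x - F y))"
    using n by (simp add: emp_df_def algebra_simps)
  finally show ?thesis .
qed

lemma prob_int:
  assumes i: "i \<ge> 1" and yx: "y \<le> x"
  shows "prob (X i -` {y<..x} \<inter> space M) = F x - F y"
proof -
  have eq: "X i -` {y<..x} \<inter> space M = {\<omega>\<in>space M. X i \<omega> \<le> x} - {\<omega>\<in>space M. X i \<omega> \<le> y}" by auto
  have "{\<omega>\<in>space M. X i \<omega> \<le> y} \<subseteq> {\<omega>\<in>space M. X i \<omega> \<le> x}" using yx by auto
  moreover have "{\<omega>\<in>space M. X i \<omega> \<le> y} \<in> sets M" "{\<omega>\<in>space M. X i \<omega> \<le> x} \<in> sets M"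
    using rv[of i] by measurable
  ultimately show ?thesis unfolding eq using marginal[OF i] by (simp add: finite_measure_Diff)
qed

lemma prob_le: "i \<ge> 1 \<Longrightarrow> prob (X i -` {..x} \<inter> space M) = F x"
  using marginal[of i x] by (simp add: vimage_def Int_def conj_commute)

end

lemma exp_ln_pow: "n > 0 \<Longrightarrow> exp (c - real k * ln (real n)) = exp c / real n ^ k"
  by (simp add: exp_diff exp_of_nat_mult)

context ms
begin

lemma ties_AE: "AE \<omega> in M. \<forall>i j. i \<ge> 1 \<longrightarrow> j \<ge> 1 \<longrightarrow> i \<noteq> j \<longrightarrow> X i \<omega> \<noteq> X j \<omega>"
proof -
  have "AE \<omega> in M. i \<ge> 1 \<longrightarrow> j \<ge> 1 \<longrightarrow> i \<noteq> j \<longrightarrow> X i \<omega> \<noteq> X j \<omega>" for i j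
  proof (cases "i \<ge> 1 \<and> j \<ge> 1 \<and> i \<noteq> j")
    case True
    have s: "{\<omega> \<in> space M. X i \<omega> = X j \<omega>} \<in> sets M" using rv[of i] rv[of j] by measurable
    have "{\<omega> \<in> space M. X i \<omega> = X j \<omega>} \<in> null_sets M"
      using ties[of i j] True s by (simp add: null_sets_def emeasure_eq_measure)
    then show ?thesis by (rule AE_I') auto
  qed auto
  then show ?thesis by (simp add: AE_all_countable)
qed

lemma Ev_sets:
  fixes q lam :: real
  assumes "B \<in> sets borel"
  shows "{\<omega>\<in>space M. 2 * lam \<le> \<bar>\<Sum>i\<in>{1..n}. indicator (X i -` B \<inter> space M) \<omega> - q\<bar>} \<in> sets M"
proof -
  have "(\<lambda>\<omega>. \<Sum>i\<in>{1..n}. indicator (X i -` B \<inter> space M) \<omega> - q) \<in> borel_measurable M"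
    using assms rv by (intro borel_measurable_sum borel_measurable_diff borel_measurable_indicator measurable_sets)
      auto
  then show ?thesis by measurable
qed

end

context ms
begin

lemma main:
  "AE \<omega> in M. (\<lambda>n. quantile (emp_df X n \<omega>) p - (xi - (emp_df X n \<omega> xi - p) / f xi))
      \<in> O(\<lambda>n. real n powr (-3/4) * ln (real n))"
proof -
  obtain d fB Bd where d: "d > 0" and dN: "{xi - d .. xi + d} \<subseteq> N" and fB: "\<And>x. x \<in> N \<Longrightarrow> f x \<le> fB"
    and Bd: "\<And>x. x \<in> N \<Longrightarrow> \<bar>f' x\<bar> \<le> Bd" and f0pos: "0 < f xi"
    using cst_ex by blast
  define f0 where "f0 = f xi"
  have f0: "f0 > 0" using f0pos by (simp add: f0_def)
  have xiN: "xi \<in> N" using N(2) by (simp add: xi_def)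
  have fB0: "0 < fB" using fB[OF xiN] f0 by (simp add: f0_def)
  have Bd0: "0 \<le> Bd" using Bd[OF xiN] by linarith
  obtain Cp where Cp: "\<And>m. m \<ge> 1 \<Longrightarrow> phi_mix M X m \<le> Cp / real m ^ 3" using Cp_exists by blast
  obtain \<Phi> where Phi: "\<And>D. (\<Sum>d=1..D. phi_mix M X d) \<le> \<Phi>" using Phi_exists by blast
  have Phi0: "0 \<le> \<Phi>" using Phi[of 0] by simp
  have lipF: "\<bar>F y - F x\<bar> \<le> fB * \<bar>y - x\<bar>" if "x \<in> {xi-d..xi+d}" "y \<in> {xi-d..xi+d}" for x y
  proof (rule lip_gen[OF _ _ that])
    fix z assume z: "z \<in> {xi-d..xi+d}"
    then have zN: "z \<in> N" using dN by auto
    show "(F has_real_derivative f z) (at z)" by (rule dens[OF zN])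
    show "\<bar>f z\<bar> \<le> fB" using fB[OF zN] fpos[OF zN] by simp
  qed
  have tay: "\<bar>F x - F xi - f0 * (x - xi)\<bar> \<le> Bd * (x - xi)\<^sup>2" if "x \<in> {xi-d..xi+d}" for x
    unfolding f0_def
    by (rule taylor_gen[OF _ _ _ that]) (use dN d in \<open>auto intro!: dens fderiv Bd\<close>)
  have Fmono: "\<And>x y. x \<le> y \<Longrightarrow> F x \<le> F y" by (rule F_basic(1))

  define r where "r n = sqrt (sqrt (real n))" for n :: nat
  define A where "A = 12 / f0"
  define a where "a n = A * ln (real n) / sqrt (real n)" for n :: nat
  define h where "h n = 1 / r n ^ 3" for n :: nat
  define K where "K n = nat \<lceil>a n / h n\<rceil> + 1" for n :: nat
  define g where "g n k = xi + real_of_int k * h n" for n :: nat and k :: int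
  define C1 where "C1 = 1 + 2 * \<Phi>"
  define Q where "Q = 2 * fB * A"
  define c2 where "c2 = 2 * Q * C1 + 4"
  define lam1 where "lam1 n = 3 * sqrt (real n) * ln (real n)" for n :: nat
  define lam2 where "lam2 n = c2 * r n * ln (real n)" for n :: nat
  define Bs where "Bs n k = (if 0 \<le> k then {xi<..g n k} else {g n k<..xi})" for n :: nat and k :: int
  define qq where "qq n k = \<bar>F (g n k) - F xi\<bar>" for n :: nat and k :: int
  define Ev where "Ev B q lam n = {\<omega>\<in>space M. 2 * lam \<le> \<bar>\<Sum>i\<in>{1..n}. indicator (X i -` B \<inter> space M) \<omega> - q\<bar>}"
    for B :: "real set" and q lam :: real and n :: nat
  define E1 where "E1 n = Ev {..xi + a n} (F (xi + a n)) (lam1 n) n \<union> Ev {..xi - a n} (F (xi - a n)) (lam1 n) n" for n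
  define E2 where "E2 n = (\<Union>k\<in>{- int (K n)..int (K n)}. Ev (Bs n k) (qq n k) (lam2 n) n)" for n
  define E where "E n = E1 n \<union> E2 n" for n
  have A0: "A > 0" using f0 by (simp add: A_def)
  have C1pos: "C1 \<ge> 1" using Phi0 by (simp add: C1_def)
  have Q0: "Q > 0" using fB0 A0 by (simp add: Q_def)
  have c2pos: "c2 > 0"
  proof -
    have "0 \<le> 2 * Q * C1" using Q0 C1pos by simp
    then show ?thesis unfolding c2_def by linarith
  qed
  have Ev_s: "Ev B q lam n \<in> sets M" if "B \<in> sets borel" for B q lam n
    unfolding Ev_def by (rule Ev_sets[OF that])
  have Bs_borel: "Bs n k \<in> sets borel" for n k by (simp add: Bs_def)
  have E_sets: "E n \<in> sets M" for n
    unfolding E_def E1_def E2_def by (intro sets.Un sets.finite_UN Ev_s Bs_borel) auto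

  define e0 where "e0 = f0 / (2 * (Bd + 1))"
  have e0: "e0 > 0" using f0 Bd0 by (simp add: e0_def)
  have evd: "eventually (\<lambda>n. n \<ge> 3 \<and> a n + 2 * h n \<le> d \<and> 2 * h n \<le> a n \<and> Bd * a n \<le> f0 / 2
      \<and> 2 * real (K n) + 1 \<le> real n ^ 2) at_top"
  proof -
    have e1: "eventually (\<lambda>n::nat. n \<ge> 3) at_top" by (rule eventually_ge_at_top)
    have e2: "eventually (\<lambda>n::nat. A * ln (real n) / sqrt (real n) + 2 * (1 / sqrt (sqrt (real n)) ^ 3) \<le> d) at_top"
      using A0 d by real_asymp
    have e3: "eventually (\<lambda>n::nat. 2 * (1 / sqrt (sqrt (real n)) ^ 3) \<le> A * ln (real n) / sqrt (real n)) at_top"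
      using A0 by real_asymp
    have e4: "eventually (\<lambda>n::nat. A * ln (real n) / sqrt (real n) \<le> e0) at_top"
      using A0 e0 by real_asymp
    have e5: "eventually (\<lambda>n::nat. 2 * (A * ln (real n) / sqrt (real n) / (1 / sqrt (sqrt (real n)) ^ 3) + 2) + 1 \<le> real n ^ 2) at_top"
      using A0 by real_asymp
    show ?thesis using e1 e2 e3 e4 e5
    proof eventually_elim
      case (elim n)
      have an: "a n \<ge> 0" using elim(1) A0 by (simp add: a_def)
      have hn: "h n > 0" using elim(1) by (simp add: h_def r_def)
      have "Bd * a n \<le> (Bd + 1) * a n" using an by (simp add: algebra_simps)
      also have "\<dots> \<le> (Bd + 1) * e0" using elim(4) Bd0 by (intro mult_left_mono) (auto simp: a_def)
      also have "\<dots> = f0 / 2" using Bd0 by (simp add: e0_def field_simps)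
      finally have 4: "Bd * a n \<le> f0 / 2" .
      have "real (K n) \<le> a n / h n + 2"
      proof -
        have "0 \<le> a n / h n" using an hn by simp
        then have "real (nat \<lceil>a n / h n\<rceil>) = of_int \<lceil>a n / h n\<rceil>" by simp
        also have "\<dots> \<le> a n / h n + 1" by linarith
        finally show ?thesis by (simp add: K_def)
      qed
      then have 5: "2 * real (K n) + 1 \<le> real n ^ 2" using elim(5) by (simp add: a_def h_def r_def)
      show ?case using elim(1,2,3) 4 5 by (simp add: a_def h_def r_def)
    qed
  qed
  have pE: "eventually (\<lambda>n. prob (E n) \<le> (8 * exp (2 * C1 + 32 * exp 1 * Cp) + 4 * exp (32 * exp 1 * Cp)) / real n ^ 2) at_top"
    using evd
  proof eventually_elim
    case (elim n)
    then have n3: "n \<ge> 3" and dom: "a n + 2 * h n \<le> d" and ha: "2 * h n \<le> a n"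
      and Kn: "2 * real (K n) + 1 \<le> real n ^ 2" by auto
    have n1: "n \<ge> 1" and npos: "real n > 0" and n0: "0 < n" using n3 by auto
    have r2: "r n ^ 2 = sqrt (real n)" by (simp add: r_def)
    have r4: "r n ^ 4 = real n"
    proof -
      have "r n ^ 4 = (r n ^ 2) ^ 2" by (simp add: power_mult[symmetric])
      then show ?thesis by (simp add: r2)
    qed
    have r0: "r n \<ge> 0" by (simp add: r_def)
    have r1: "r n \<ge> 1" using n1 by (simp add: r_def)
    have sqn: "sqrt (real n) * sqrt (real n) = real n" by simp
    have sqpos: "sqrt (real n) > 0" using npos by simp
    have ln0: "ln (real n) \<ge> 0" using n1 by simp
    have hpos: "h n > 0" using r1 by (simp add: h_def)
    have an: "a n \<ge> 0" using A0 ln0 by (simp add: a_def)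
    have pE1: "prob (Ev {..x} (F x) (lam1 n) n) \<le> 4 * exp (2 * C1 + 32 * exp 1 * Cp) / real n ^ 3" for x
    proof -
      have Fx1: "F x \<le> 1" using prob_le[of 1 x] prob_le_1[of "X 1 -` {..x} \<inter> space M"] by simp
      have t: "1 / r n ^ 2 > 0" "1 / r n ^ 2 * r n \<le> 1" using r1 by (auto simp: power2_eq_square field_simps)
      have "prob (Ev {..x} (F x) (lam1 n) n) \<le> 4 * exp (- (1 / r n ^ 2) * lam1 n + 2 * real n * (1 / r n ^ 2)\<^sup>2 * 1 * (1 + 2 * \<Phi>) + 32 * exp 1 * Cp)"
        unfolding Ev_def by (rule tail_bound[OF rv _ prob_le Fx1 Phi Cp n1 r4 r0 t]) auto
      also have "- (1 / r n ^ 2) * lam1 n + 2 * real n * (1 / r n ^ 2)\<^sup>2 * 1 * (1 + 2 * \<Phi>) + 32 * exp 1 * Cp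
          = (2 * C1 + 32 * exp 1 * Cp) - real 3 * ln (real n)"
        using sqpos npos by (simp add: r2 power_divide lam1_def C1_def)
      also have "exp \<dots> = exp (2 * C1 + 32 * exp 1 * Cp) / real n ^ 3" by (rule exp_ln_pow[OF n0])
      finally show ?thesis by simp
    qed
    have pE2k: "prob (Ev (Bs n k) (qq n k) (lam2 n) n) \<le> 4 * exp (32 * exp 1 * Cp) / real n ^ 4"
      if k: "k \<in> {- int (K n)..int (K n)}" for k
    proof -
      have Kh: "real (K n) * h n \<le> a n + 2 * h n"
      proof -
        have "0 \<le> a n / h n" using an hpos by simp
        then have "real (nat \<lceil>a n / h n\<rceil>) = of_int \<lceil>a n / h n\<rceil>" by simp
        also have "\<dots> \<le> a n / h n + 1" by linarith
        finally have "real (K n) \<le> a n / h n + 2" by (simp add: K_def)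
        then have "real (K n) * h n \<le> (a n / h n + 2) * h n" using hpos by (intro mult_right_mono) auto
        moreover have "(a n / h n + 2) * h n = a n + 2 * h n" using hpos by (simp add: field_simps)
        ultimately show ?thesis by simp
      qed
      have gk: "\<bar>g n k - xi\<bar> \<le> a n + 2 * h n"
      proof -
        have "\<bar>real_of_int k\<bar> \<le> real (K n)" using k by auto
        then have "\<bar>g n k - xi\<bar> \<le> real (K n) * h n" using hpos by (simp add: g_def abs_mult mult_right_mono)
        then show ?thesis using Kh by linarith
      qed
      have gdom: "g n k \<in> {xi-d..xi+d}" using gk dom by auto
      have xidom: "xi \<in> {xi-d..xi+d}" using d by auto
      have qA: "prob (X i -` Bs n k \<inter> space M) = qq n k" if i: "i \<ge> 1" for i
      proof (cases "0 \<le> k")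
        case True
        then have "xi \<le> g n k" using hpos by (simp add: g_def)
        then show ?thesis using True prob_int[OF i] Fmono by (simp add: Bs_def qq_def)
      next
        case False
        then have "g n k \<le> xi" using hpos by (simp add: g_def mult_nonpos_nonneg)
        then show ?thesis using False prob_int[OF i] Fmono by (simp add: Bs_def qq_def abs_minus_commute)
      qed
      have qb: "qq n k \<le> Q * ln (real n) / sqrt (real n)"
      proof -
        have "qq n k \<le> fB * \<bar>g n k - xi\<bar>" unfolding qq_def by (rule lipF[OF xidom gdom])
        also have "\<dots> \<le> fB * (2 * a n)" using gk ha fB0 by (intro mult_left_mono) auto
        also have "\<dots> = Q * ln (real n) / sqrt (real n)" by (simp add: Q_def a_def)
        finally show ?thesis .
      qed
      have t: "1 / r n > 0" "1 / r n * r n \<le> 1" using r1 by auto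
      have "prob (Ev (Bs n k) (qq n k) (lam2 n) n) \<le> 4 * exp (- (1 / r n) * lam2 n + 2 * real n * (1 / r n)\<^sup>2 * (Q * ln (real n) / sqrt (real n)) * (1 + 2 * \<Phi>) + 32 * exp 1 * Cp)"
        unfolding Ev_def by (rule tail_bound[OF rv Bs_borel qA qb Phi Cp n1 r4 r0 t])
      also have "- (1 / r n) * lam2 n + 2 * real n * (1 / r n)\<^sup>2 * (Q * ln (real n) / sqrt (real n)) * (1 + 2 * \<Phi>) + 32 * exp 1 * Cp
          = 32 * exp 1 * Cp - real 4 * ln (real n)"
        using sqpos npos r1 by (simp add: r2 power_divide lam2_def c2_def C1_def) (simp add: field_simps)
      also have "exp \<dots> = exp (32 * exp 1 * Cp) / real n ^ 4" by (rule exp_ln_pow[OF n0])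
      finally show ?thesis by simp
    qed
    have "prob (E n) \<le> prob (E1 n) + prob (E2 n)"
      unfolding E_def by (rule measure_Un_le) (use E_sets in \<open>auto simp: E_def E1_def E2_def intro!: sets.finite_UN Ev_s Bs_borel\<close>)
    also have "prob (E1 n) \<le> 2 * (4 * exp (2 * C1 + 32 * exp 1 * Cp) / real n ^ 3)"
    proof -
      have "prob (E1 n) \<le> prob (Ev {..xi + a n} (F (xi + a n)) (lam1 n) n) + prob (Ev {..xi - a n} (F (xi - a n)) (lam1 n) n)"
        unfolding E1_def by (rule measure_Un_le) (auto intro!: Ev_s)
      then show ?thesis using pE1[of "xi + a n"] pE1[of "xi - a n"] by simp
    qed
    also have "prob (E2 n) \<le> (2 * real (K n) + 1) * (4 * exp (32 * exp 1 * Cp) / real n ^ 4)"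
    proof -
      have "prob (E2 n) \<le> (\<Sum>k\<in>{- int (K n)..int (K n)}. prob (Ev (Bs n k) (qq n k) (lam2 n) n))"
        unfolding E2_def by (rule finite_measure_subadditive_finite) (auto intro!: Ev_s Bs_borel)
      also have "\<dots> \<le> real (card {- int (K n)..int (K n)}) * (4 * exp (32 * exp 1 * Cp) / real n ^ 4)"
        by (rule sum_bounded_above) (rule pE2k)
      also have "real (card {- int (K n)..int (K n)}) = 2 * real (K n) + 1" by simp
      finally show ?thesis .
    qed
    also have "2 * (4 * exp (2 * C1 + 32 * exp 1 * Cp) / real n ^ 3) + (2 * real (K n) + 1) * (4 * exp (32 * exp 1 * Cp) / real n ^ 4)
        \<le> (8 * exp (2 * C1 + 32 * exp 1 * Cp) + 4 * exp (32 * exp 1 * Cp)) / real n ^ 2"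
    proof -
      have a1: "2 * (4 * exp (2 * C1 + 32 * exp 1 * Cp) / real n ^ 3) \<le> 8 * exp (2 * C1 + 32 * exp 1 * Cp) / real n ^ 2"
      proof -
        have "real n ^ 2 \<le> real n ^ 3" using n1 by (intro power_increasing) auto
        then show ?thesis using npos by (simp add: divide_left_mono frac_le)
      qed
      have a2: "(2 * real (K n) + 1) * (4 * exp (32 * exp 1 * Cp) / real n ^ 4) \<le> 4 * exp (32 * exp 1 * Cp) / real n ^ 2"
      proof -
        have "(2 * real (K n) + 1) * (4 * exp (32 * exp 1 * Cp) / real n ^ 4) \<le> real n ^ 2 * (4 * exp (32 * exp 1 * Cp) / real n ^ 4)"
          using Kn by (intro mult_right_mono) auto
        also have "\<dots> = 4 * exp (32 * exp 1 * Cp) / real n ^ 2" using npos by (simp add: field_simps power4_eq_xxxx power2_eq_square)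
        finally show ?thesis .
      qed
      show ?thesis using a1 a2 by (simp add: add_divide_distrib)
    qed
    finally show ?case by simp
  qed
  have sumE: "summable (\<lambda>n. prob (E n))"
  proof (rule summable_comparison_test_ev)
    show "eventually (\<lambda>n. norm (prob (E n)) \<le> (8 * exp (2 * C1 + 32 * exp 1 * Cp) + 4 * exp (32 * exp 1 * Cp)) * inverse (real n ^ 2)) at_top"
      using pE by eventually_elim (simp add: divide_inverse)
    show "summable (\<lambda>n. (8 * exp (2 * C1 + 32 * exp 1 * Cp) + 4 * exp (32 * exp 1 * Cp)) * inverse (real n ^ 2))"
      by (intro summable_mult inverse_power_summable) auto
  qed
  have BC: "AE \<omega> in M. eventually (\<lambda>n. \<omega> \<in> space M - E n) at_top"
    by (rule borel_cantelli_AE1[OF E_sets _ sumE]) (simp add: less_top[symmetric])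
  define M0 where "M0 = (1 + 2 * c2 + fB + Bd * A\<^sup>2) / f0"
  define w where "w n = 1 / real n + ln (real n) * r n / real n + 1 / r n ^ 3 + ln (real n) ^ 2 / real n" for n :: nat
  have M0pos: "M0 > 0"
  proof -
    have "0 \<le> Bd * A\<^sup>2" using Bd0 by simp
    then have "0 < 1 + 2 * c2 + fB + Bd * A\<^sup>2" using c2pos fB0 by linarith
    then show ?thesis using f0 by (simp add: M0_def)
  qed
  have wO: "w \<in> O(\<lambda>n. real n powr (-3/4) * ln (real n))"
    unfolding w_def r_def by real_asymp
  have det: "\<bar>quantile (emp_df X n \<omega>) p - (xi - (emp_df X n \<omega> xi - p) / f xi)\<bar> \<le> M0 * w n"
    if w: "\<omega> \<in> space M" and inj: "\<forall>i j. i \<ge> 1 \<longrightarrow> j \<ge> 1 \<longrightarrow> i \<noteq> j \<longrightarrow> X i \<omega> \<noteq> X j \<omega>"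
      and nE: "\<omega> \<notin> E n" and n3: "n \<ge> 3" and dom: "a n + 2 * h n \<le> d" and ha: "2 * h n \<le> a n"
      and Bda: "Bd * a n \<le> f0 / 2"
    for \<omega> n
  proof -
    define Fn where "Fn = emp_df X n \<omega>"
    define zq where "zq = quantile Fn p"
    define Dn where "Dn x = Fn x - Fn xi - (F x - F xi)" for x
    have n1: "n \<ge> 1" and npos: "real n > 0" and n0: "0 < n" using n3 by auto
    have r2: "r n ^ 2 = sqrt (real n)" by (simp add: r_def)
    have r1: "r n \<ge> 1" using n1 by (simp add: r_def)
    have sqpos: "sqrt (real n) > 0" using npos by simp
    have ln0: "ln (real n) \<ge> 0" using n1 by simp
    have hpos: "h n > 0" using r1 by (simp add: h_def)
    have an: "a n \<ge> 0" using A0 ln0 by (simp add: a_def)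
    have ad: "a n \<le> d" using dom hpos by linarith
    have xidom: "xi \<in> {xi-d..xi+d}" using d by auto
    have nE1: "\<omega> \<notin> Ev {..xi + a n} (F (xi + a n)) (lam1 n) n" "\<omega> \<notin> Ev {..xi - a n} (F (xi - a n)) (lam1 n) n"
      using nE by (auto simp: E_def E1_def)
    have nE2: "\<omega> \<notin> Ev (Bs n k) (qq n k) (lam2 n) n" if "k \<in> {- int (K n)..int (K n)}" for k
      using nE that by (auto simp: E_def E2_def)
    have fa: "f0 * a n / 2 = 6 * ln (real n) / sqrt (real n)" using f0 by (simp add: a_def A_def)
    have dev1: "\<bar>Fn x - F x\<bar> < f0 * a n / 2" if "\<omega> \<notin> Ev {..x} (F x) (lam1 n) n" for x
    proof -
      have "\<bar>real n * (Fn x - F x)\<bar> < 2 * lam1 n"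
        using that w sum_le_emp[OF w n1, of x] by (simp add: Ev_def Fn_def not_le)
      also have "2 * lam1 n = real n * (f0 * a n / 2)"
      proof -
        have "real n * (f0 * a n / 2) = 6 * ln (real n) * (real n / sqrt (real n))" unfolding fa by simp
        also have "\<dots> = 6 * ln (real n) * sqrt (real n)" by (simp add: real_div_sqrt)
        finally show ?thesis by (simp add: lam1_def)
      qed
      finally show ?thesis using npos by (simp add: abs_mult)
    qed
    have tayb: "\<bar>F x - p - f0 * (x - xi)\<bar> \<le> f0 / 2 * a n" if "\<bar>x - xi\<bar> \<le> a n" for x
    proof -
      have xd: "x \<in> {xi-d..xi+d}" using that ad by auto
      have "\<bar>F x - p - f0 * (x - xi)\<bar> \<le> Bd * (x - xi)\<^sup>2" using tay[OF xd] F_xi by simp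
      also have "\<dots> \<le> Bd * (a n)\<^sup>2" using that Bd0 by (intro mult_left_mono) (auto simp: abs_le_square_iff[symmetric])
      also have "\<dots> = (Bd * a n) * a n" by (simp add: power2_eq_square)
      also have "\<dots> \<le> f0 / 2 * a n" using Bda an by (intro mult_right_mono) auto
      finally show ?thesis .
    qed
    have Fup: "p + f0 * a n / 2 \<le> F (xi + a n)"
    proof -
      have "\<bar>F (xi + a n) - p - f0 * ((xi + a n) - xi)\<bar> \<le> f0 / 2 * a n" using an by (intro tayb) simp
      then have "- (f0 / 2 * a n) \<le> F (xi + a n) - p - f0 * ((xi + a n) - xi)" unfolding abs_le_iff by linarith
      then show ?thesis by (simp add: algebra_simps)
    qed
    have Flo: "F (xi - a n) \<le> p - f0 * a n / 2"
    proof -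
      have "\<bar>F (xi - a n) - p - f0 * ((xi - a n) - xi)\<bar> \<le> f0 / 2 * a n" using an by (intro tayb) simp
      then have "F (xi - a n) - p - f0 * ((xi - a n) - xi) \<le> f0 / 2 * a n" unfolding abs_le_iff by linarith
      then show ?thesis by (simp add: algebra_simps)
    qed
    have Fnup: "p \<le> Fn (xi + a n)" using dev1[OF nE1(1), unfolded abs_less_iff] Fup by linarith
    have Fnlo: "Fn (xi - a n) < p" using dev1[OF nE1(2), unfolded abs_less_iff] Flo by linarith
    define Sset where "Sset = {x. p \<le> Fn x}"
    have mem: "xi + a n \<in> Sset" using Fnup by (simp add: Sset_def)
    have lowb: "xi - a n < s" if "s \<in> Sset" for s
    proof (rule ccontr)
      assume "\<not> xi - a n < s"
      then have "Fn s \<le> Fn (xi - a n)" unfolding Fn_def by (intro emp_df_mono) simp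
      then show False using that Fnlo by (simp add: Sset_def)
    qed
    have zqS: "zq = Inf Sset" by (simp add: zq_def quantile_def Sset_def)
    have bddS: "bdd_below Sset" using lowb by (auto simp: bdd_below_def intro!: exI[of _ "xi - a n"] less_imp_le)
    have zup: "zq \<le> xi + a n" unfolding zqS by (rule cInf_lower[OF mem bddS])
    have zlo: "xi - a n \<le> zq" unfolding zqS using mem by (intro cInf_greatest) (auto intro: less_imp_le lowb)
    have zabs: "\<bar>zq - xi\<bar> \<le> a n" using zup zlo by simp
    have injon: "inj_on (\<lambda>i. X i \<omega>) {1..n}" unfolding inj_on_def using inj by (metis atLeastAtMost_iff)
    have rho: "p \<le> Fn zq" "Fn zq < p + 1 / real n"
      using emp_quantile[where X=X and \<omega>=\<omega> and n=n and p=p, OF n1 injon p(1)] p(2) by (auto simp: Fn_def zq_def)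
    have Kh: "real (K n) * h n \<le> a n + 2 * h n" and Kr: "real (K n) = of_int \<lceil>a n / h n\<rceil> + 1"
    proof -
      have "0 \<le> a n / h n" using an hpos by simp
      then show Kr: "real (K n) = of_int \<lceil>a n / h n\<rceil> + 1" by (simp add: K_def)
      have "of_int \<lceil>a n / h n\<rceil> \<le> a n / h n + 1" by linarith
      then have "real (K n) \<le> a n / h n + 2" using Kr by linarith
      then have "real (K n) * h n \<le> (a n / h n + 2) * h n" using hpos by (intro mult_right_mono) auto
      moreover have "(a n / h n + 2) * h n = a n + 2 * h n" using hpos by (simp add: field_simps)
      ultimately show "real (K n) * h n \<le> a n + 2 * h n" by simp
    qed
    have gdom: "g n k \<in> {xi-d..xi+d}" if k: "k \<in> {- int (K n)..int (K n)}" for k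
    proof -
      have "\<bar>real_of_int k\<bar> \<le> real (K n)" using k by auto
      then have "\<bar>g n k - xi\<bar> \<le> real (K n) * h n" using hpos by (simp add: g_def abs_mult mult_right_mono)
      then show ?thesis using Kh dom by auto
    qed
    have Dk: "\<bar>Dn (g n k)\<bar> < 2 * lam2 n / real n" if k: "k \<in> {- int (K n)..int (K n)}" for k
    proof -
      have lt: "\<bar>\<Sum>i\<in>{1..n}. indicator (X i -` Bs n k \<inter> space M) \<omega> - qq n k\<bar> < 2 * lam2 n"
        using nE2[OF k] w by (simp add: Ev_def not_le)
      have "\<bar>real n * Dn (g n k)\<bar> < 2 * lam2 n"
      proof (cases "0 \<le> k")
        case True
        then have le: "xi \<le> g n k" using hpos by (simp add: g_def)
        then have "qq n k = F (g n k) - F xi" using Fmono by (simp add: qq_def)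
        then show ?thesis using lt True sum_int_emp[OF w n1 le] by (simp add: Bs_def Dn_def Fn_def)
      next
        case False
        then have le: "g n k \<le> xi" using hpos by (simp add: g_def mult_nonpos_nonneg)
        then have qe: "qq n k = F xi - F (g n k)" using Fmono by (simp add: qq_def abs_minus_commute)
        have "real n * Dn (g n k) = - (\<Sum>i\<in>{1..n}. indicator (X i -` Bs n k \<inter> space M) \<omega> - qq n k)"
          using sum_int_emp[OF w n1 le] False by (simp add: qe Bs_def Dn_def Fn_def algebra_simps)
        then show ?thesis using lt by simp
      qed
      then show ?thesis using npos by (simp add: abs_mult pos_less_divide_eq mult.commute)
    qed
    define k0 where "k0 = \<lfloor>(zq - xi) / h n\<rfloor>"
    have k0a: "real_of_int k0 \<le> (zq - xi) / h n" "(zq - xi) / h n < real_of_int k0 + 1" by (simp_all add: k0_def)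
    have g0: "g n k0 \<le> zq" using k0a(1) hpos by (simp add: g_def pos_le_divide_eq mult.commute)
    have g1: "zq < g n (k0 + 1)" using k0a(2) hpos by (simp add: g_def pos_divide_less_eq algebra_simps)
    have g1h: "g n (k0 + 1) = g n k0 + h n" by (simp add: g_def algebra_simps)
    have zqh: "\<bar>(zq - xi) / h n\<bar> \<le> a n / h n" using zabs hpos by (simp add: abs_divide divide_right_mono)
    have k0r: "k0 \<in> {- int (K n)..int (K n)}" "k0 + 1 \<in> {- int (K n)..int (K n)}"
    proof -
      have c1: "a n / h n \<le> of_int \<lceil>a n / h n\<rceil>" by (rule le_of_int_ceiling)
      have "(- a n) / h n \<le> (zq - xi) / h n" using zlo hpos by (intro divide_right_mono) auto
      then have zl: "- (a n / h n) \<le> (zq - xi) / h n" by simp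
      have zu: "(zq - xi) / h n \<le> a n / h n" using zup hpos by (intro divide_right_mono) auto
      have "- real (K n) \<le> real_of_int k0" using k0a(2) zl c1 Kr by linarith
      moreover have "real_of_int k0 + 1 \<le> real (K n)" using k0a(1) zu c1 Kr by linarith
      ultimately have "- int (K n) \<le> k0" "k0 + 1 \<le> int (K n)" by linarith+
      then show "k0 \<in> {- int (K n)..int (K n)}" "k0 + 1 \<in> {- int (K n)..int (K n)}" by auto
    qed
    have zdom: "zq \<in> {xi-d..xi+d}" using zabs ad by auto
    have L1: "F (g n (k0 + 1)) - F zq \<le> fB * h n"
    proof -
      have "\<bar>F (g n (k0 + 1)) - F zq\<bar> \<le> fB * \<bar>g n (k0 + 1) - zq\<bar>" by (rule lipF[OF zdom gdom[OF k0r(2)]])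
      also have "\<dots> \<le> fB * h n" using g0 g1 g1h fB0 by (intro mult_left_mono) auto
      finally show ?thesis by simp
    qed
    have L0: "F zq - F (g n k0) \<le> fB * h n"
    proof -
      have "\<bar>F zq - F (g n k0)\<bar> \<le> fB * \<bar>zq - g n k0\<bar>" by (rule lipF[OF gdom[OF k0r(1)] zdom])
      also have "\<dots> \<le> fB * h n" using g0 g1 g1h fB0 by (intro mult_left_mono) auto
      finally show ?thesis by simp
    qed
    have mono1: "Fn zq \<le> Fn (g n (k0 + 1))" unfolding Fn_def by (rule emp_df_mono) (use g1 in simp)
    have mono0: "Fn (g n k0) \<le> Fn zq" unfolding Fn_def by (rule emp_df_mono[OF g0])
    have Dz: "\<bar>Dn zq\<bar> \<le> 2 * lam2 n / real n + fB * h n"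
      using Dk[OF k0r(1)] Dk[OF k0r(2)] L0 L1 mono0 mono1 by (simp add: Dn_def abs_le_iff abs_less_iff)
    define T where "T = F zq - F xi - f0 * (zq - xi)"
    have Tb: "\<bar>T\<bar> \<le> Bd * (a n)\<^sup>2"
    proof -
      have "\<bar>T\<bar> \<le> Bd * (zq - xi)\<^sup>2" unfolding T_def by (rule tay[OF zdom])
      also have "\<dots> \<le> Bd * (a n)\<^sup>2" using zabs Bd0 by (intro mult_left_mono) (auto simp: abs_le_square_iff[symmetric])
      finally show ?thesis .
    qed
    define diff where "diff = zq - (xi - (Fn xi - p) / f0)"
    have fdiff: "f0 * diff = (Fn zq - p) - Dn zq - T"
      using f0 F_xi by (simp add: diff_def Dn_def T_def field_simps)
    have "\<bar>f0 * diff\<bar> \<le> 1 / real n + (2 * lam2 n / real n + fB * h n) + Bd * (a n)\<^sup>2"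
      using fdiff rho Dz Tb by (simp add: abs_le_iff abs_less_iff)
    also have "\<dots> = 1 * (1 / real n) + 2 * c2 * (ln (real n) * r n / real n) + fB * (1 / r n ^ 3) + Bd * A\<^sup>2 * (ln (real n) ^ 2 / real n)"
    proof -
      have "(a n)\<^sup>2 = A\<^sup>2 * (ln (real n) ^ 2 / real n)" by (simp add: a_def power_divide power_mult_distrib)
      then show ?thesis by (simp add: lam2_def h_def mult_ac)
    qed
    also have "\<dots> \<le> (1 + 2 * c2 + fB + Bd * A\<^sup>2) * w n"
    proof -
      define w1 where "w1 = 1 / real n"
      define w2 where "w2 = ln (real n) * r n / real n"
      define w3 where "w3 = 1 / r n ^ 3"
      define w4 where "w4 = ln (real n) ^ 2 / real n"
      have ws: "0 \<le> w1" "0 \<le> w2" "0 \<le> w3" "0 \<le> w4" using ln0 r1 by (auto simp: w1_def w2_def w3_def w4_def)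
      have cs: "0 \<le> 2 * c2" "0 \<le> fB" "0 \<le> Bd * A\<^sup>2" using c2pos fB0 Bd0 by auto
      have "1 * w1 + 2 * c2 * w2 + fB * w3 + Bd * A\<^sup>2 * w4 \<le> (1 + 2 * c2 + fB + Bd * A\<^sup>2) * (w1 + w2 + w3 + w4)"
      proof -
        have "(1 + 2 * c2 + fB + Bd * A\<^sup>2) * (w1 + w2 + w3 + w4) - (1 * w1 + 2 * c2 * w2 + fB * w3 + Bd * A\<^sup>2 * w4)
          = (2 * c2 + fB + Bd * A\<^sup>2) * w1 + (1 + fB + Bd * A\<^sup>2) * w2 + (1 + 2 * c2 + Bd * A\<^sup>2) * w3 + (1 + 2 * c2 + fB) * w4"
          by (simp add: algebra_simps)
        also have "\<dots> \<ge> 0" using ws cs Bd0 by (intro add_nonneg_nonneg mult_nonneg_nonneg) auto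
        finally show ?thesis by simp
      qed
      then show ?thesis by (simp add: w_def w1_def w2_def w3_def w4_def)
    qed
    finally have "\<bar>f0 * diff\<bar> \<le> (1 + 2 * c2 + fB + Bd * A\<^sup>2) * w n" .
    then have "\<bar>diff\<bar> \<le> M0 * w n" using f0 by (simp add: M0_def abs_mult field_simps)
    then show ?thesis by (simp add: diff_def Fn_def zq_def f0_def)
  qed
  show ?thesis
    using BC ties_AE AE_space
  proof eventually_elim
    case (elim \<omega>)
    note injw = elim(2) and wsp = elim(3)
    have evb: "eventually (\<lambda>n. \<bar>quantile (emp_df X n \<omega>) p - (xi - (emp_df X n \<omega> xi - p) / f xi)\<bar> \<le> M0 * w n) at_top"
      using elim(1) evd
    proof eventually_elim
      case (elim n)
      then show ?case using det[of \<omega> n] wsp injw by auto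
    qed
    then have "(\<lambda>n. quantile (emp_df X n \<omega>) p - (xi - (emp_df X n \<omega> xi - p) / f xi)) \<in> O(w)"
    proof (intro landau_o.bigI[OF M0pos])
      show "eventually (\<lambda>n. norm (quantile (emp_df X n \<omega>) p - (xi - (emp_df X n \<omega> xi - p) / f xi)) \<le> M0 * norm (w n)) at_top"
        using evb eventually_ge_at_top[of 1]
      proof eventually_elim
        case (elim n)
        have "w n \<ge> 0" using elim(2) by (simp add: w_def r_def)
        then show ?case using elim(1) by simp
      qed
    qed
    then show ?case using wO by (rule landau_o.big_trans)
  qed
qed

end

theorem theorem2p2:
  fixes M :: "'a measure" and X :: "nat \<Rightarrow> 'a \<Rightarrow> real"
    and F f f' :: "real \<Rightarrow> real" and p :: real and N :: "real set"
  assumes "prob_space M"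
    and rv: "\<And>i. X i \<in> borel_measurable M"
    and marginal: "\<And>i x. i \<ge> 1 \<Longrightarrow> measure M {\<omega> \<in> space M. X i \<omega> \<le> x} = F x"
    and mixing: "decseq (phi_mix M X)" "phi_mix M X \<longlonglongrightarrow> 0"
    and rate: "phi_mix M X \<in> O(\<lambda>n. real n powr (-3))"
    and ties: "\<And>i j. i \<ge> 1 \<Longrightarrow> j \<ge> 1 \<Longrightarrow> i \<noteq> j \<Longrightarrow>
                 measure M {\<omega> \<in> space M. X i \<omega> = X j \<omega>} = 0"
    and p: "0 < p" "p < 1"
    and N: "open N" "quantile F p \<in> N"
    and dens: "\<And>x. x \<in> N \<Longrightarrow> (F has_real_derivative f x) (at x)"
    and fpos: "\<And>x. x \<in> N \<Longrightarrow> f x > 0"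
    and fcont: "continuous_on N f"
    and fbdd: "bdd_above (f ` N)"
    and fderiv: "\<And>x. x \<in> N \<Longrightarrow> (f has_real_derivative f' x) (at x)"
    and f'bdd: "bounded (f' ` N)"
  shows "AE \<omega> in M.
     (\<lambda>n. quantile (emp_df X n \<omega>) p
          - (quantile F p - (emp_df X n \<omega> (quantile F p) - p) / f (quantile F p)))
     \<in> O(\<lambda>n. real n powr (-3/4) * ln (real n))"
  proof -
  interpret ms M X F f f' p N
    by (rule ms.intro[OF assms(1)], unfold_locales) (use assms in auto)
  show ?thesis using main unfolding xi_def .
qed

end
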